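(* Let $D$ be a Dedekind domain with field of fractions $K$ and let $A$ be a $D$-algebra with standard assumptions. Let $P$ be a nonzero prime ideal of $D$. Then the following are equivalent: (1) $N_{D/P}(A/PA)\neq (0)$; (2) $D_P[X]\subsetneq \textnormal{Int}_K(A_P)$; (3) $D/P$ is finite and $A/PA$ is an algebraic $D/P$-algebra of bounded degree.
   Context: A $D$-algebra $A$ satisfies the standard assumptions if it is torsion-free as a $D$-module and $A\cap K = D$ inside $K\otimes_D A$; polynomials in $K[X]$ are evaluated in $K\otimes_D A$. $A_P=(D\setminus P)^{-1}A$ and $\textnormal{Int}_K(A_P)=\{f\in K[X]\mid f(A_P)\subseteq A_P\}$. For a commutative ring $R$ and $R$-algebra $C$, $N_R(C)=\{f\in R[X]\mid f(c)=0\ \forall c\in C\}$. An algebra over a field $F$ is algebraic of bounded degree if there is $n$ such that every element satisfies a nonzero polynomial over $F$ of degree at most $n$. *)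

theory Defs
  imports "HOL-Computational_Algebra.Polynomial" "HOL-Computational_Algebra.Fraction_Field"
begin

section \<open>Commutative ring notions (the domain D is the whole type 'd)\<close>

definition is_ideal :: "'a::comm_ring_1 set \<Rightarrow> bool" where
  "is_ideal I \<longleftrightarrow> 0 \<in> I \<and> (\<forall>x\<in>I. \<forall>y\<in>I. x + y \<in> I) \<and> (\<forall>r. \<forall>x\<in>I. r * x \<in> I)"

definition is_prime_ideal :: "'a::comm_ring_1 set \<Rightarrow> bool" where
  "is_prime_ideal P \<longleftrightarrow> is_ideal P \<and> P \<noteq> UNIV \<and> (\<forall>x y. x * y \<in> P \<longrightarrow> x \<in> P \<or> y \<in> P)"

definition is_maximal_ideal :: "'a::comm_ring_1 set \<Rightarrow> bool" where
  "is_maximal_ideal M \<longleftrightarrow> is_ideal M \<and> M \<noteq> UNIV \<and>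
     (\<forall>J. is_ideal J \<longrightarrow> M \<subseteq> J \<longrightarrow> J = M \<or> J = UNIV)"

definition ideal_span :: "'a::comm_ring_1 set \<Rightarrow> 'a set" where
  "ideal_span S = {x. \<exists>c. x = (\<Sum>s\<in>S. c s * s)}"

definition noetherian_ring :: "'a::comm_ring_1 itself \<Rightarrow> bool" where
  "noetherian_ring _ \<longleftrightarrow> (\<forall>I::'a set. is_ideal I \<longrightarrow> (\<exists>S. finite S \<and> I = ideal_span S))"

definition to_K :: "'a::idom \<Rightarrow> 'a fract" where
  "to_K x = Fract x 1"

definition integrally_closed :: "'a::idom itself \<Rightarrow> bool" where
  "integrally_closed _ \<longleftrightarrow> (\<forall>(x::'a fract) (f::'a poly). lead_coeff f = 1 \<and>
      poly (map_poly to_K f) x = 0 \<longrightarrow> (\<exists>d. x = to_K d))"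

definition dedekind_domain :: "'a::idom itself \<Rightarrow> bool" where
  "dedekind_domain T \<longleftrightarrow> noetherian_ring T \<and> integrally_closed T \<and>
     (\<forall>P::'a set. is_prime_ideal P \<and> P \<noteq> {0} \<longrightarrow> is_maximal_ideal P)"

text \<open>We model K \<otimes>_D A as a ring 'b together with an injective ring homomorphism
  \<phi> : K \<rightarrow> 'b with central image (a K-algebra), and A as a subset of 'b.
  Since A is torsion-free, A embeds into K \<otimes>_D A = (D\<setminus>0)^{-1} A, and this localisation is
  characterised by: every element is \<phi>(1/d) * a with d \<noteq> 0, a \<in> A.\<close>
definition standard_assumptions :: "('d::idom fract \<Rightarrow> 'b::ring_1) \<Rightarrow> 'b set \<Rightarrow> bool" where
  "standard_assumptions \<phi> A \<longleftrightarrow>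
     \<comment> \<open>\<phi> is an injective unital ring homomorphism with central image\<close>
     \<phi> 1 = 1 \<and> (\<forall>x y. \<phi> (x + y) = \<phi> x + \<phi> y) \<and> (\<forall>x y. \<phi> (x * y) = \<phi> x * \<phi> y) \<and>
     inj \<phi> \<and> (\<forall>x b. \<phi> x * b = b * \<phi> x) \<and>
     \<comment> \<open>A is a subring containing the image of D (the D-algebra structure)\<close>
     1 \<in> A \<and> (\<forall>a\<in>A. \<forall>b\<in>A. a + b \<in> A \<and> a - b \<in> A \<and> a * b \<in> A) \<and>
     (\<forall>d. \<phi> (to_K d) \<in> A) \<and>
     \<comment> \<open>'b is K \<otimes>_D A\<close>
     (\<forall>b. \<exists>d a. d \<noteq> 0 \<and> a \<in> A \<and> b = \<phi> (inverse (to_K d)) * a) \<and>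
     \<comment> \<open>A \<inter> K = D\<close>
     A \<inter> range \<phi> = \<phi> ` range to_K"

definition peval :: "('k::zero \<Rightarrow> 'b::semiring_1) \<Rightarrow> 'k poly \<Rightarrow> 'b \<Rightarrow> 'b" where
  "peval \<psi> f b = (\<Sum>i\<le>degree f. \<psi> (coeff f i) * b ^ i)"

definition loc_D :: "'d::idom set \<Rightarrow> 'd fract set" where
  "loc_D P = {Fract x s | x s. s \<notin> P}"

definition loc_A :: "('d::idom fract \<Rightarrow> 'b::ring_1) \<Rightarrow> 'b set \<Rightarrow> 'd set \<Rightarrow> 'b set" where
  "loc_A \<phi> A P = {\<phi> (inverse (to_K s)) * a | s a. s \<notin> P \<and> a \<in> A}"

definition Int_K :: "('d::idom fract \<Rightarrow> 'b::ring_1) \<Rightarrow> 'b set \<Rightarrow> 'd fract poly set" where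
  "Int_K \<phi> S = {f. \<forall>b\<in>S. peval \<phi> f b \<in> S}"

definition ext_ideal :: "('d::idom fract \<Rightarrow> 'b::ring_1) \<Rightarrow> 'b set \<Rightarrow> 'd set \<Rightarrow> 'b set" where
  "ext_ideal \<phi> A P = {x. \<exists>(n::nat) p a. (\<forall>i<n. p i \<in> P \<and> a i \<in> A) \<and>
                          x = (\<Sum>i<n. \<phi> (to_K (p i)) * a i)}"

text \<open>Elements of (D/P)[X] are represented by lifts g \<in> D[X]; g is zero mod P iff all its
  coefficients lie in P; g(\<bar>a\<bar>) = 0 in A/PA iff g(a) \<in> PA.
  N_{D/P}(A/PA) \<noteq> (0): some polynomial over D/P, nonzero, vanishes on all of A/PA.\<close>
definition null_ideal_mod_nonzero :: "('d::idom fract \<Rightarrow> 'b::ring_1) \<Rightarrow> 'b set \<Rightarrow> 'd set \<Rightarrow> bool" where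
  "null_ideal_mod_nonzero \<phi> A P \<longleftrightarrow>
     (\<exists>g::'d poly. (\<exists>i. coeff g i \<notin> P) \<and>
        (\<forall>a\<in>A. peval (\<phi> \<circ> to_K) g a \<in> ext_ideal \<phi> A P))"

definition quot_ring :: "'d::comm_ring_1 set \<Rightarrow> 'd set set" where
  "quot_ring P = (\<lambda>x. {y. x - y \<in> P}) ` UNIV"

text \<open>A/PA is an algebraic D/P-algebra of bounded degree: there is n such that every
  residue class a + PA is a root of a nonzero polynomial over D/P of degree \<le> n
  (the reduction mod P of g is nonzero and has degree \<le> n).\<close>
definition bounded_degree_mod :: "('d::idom fract \<Rightarrow> 'b::ring_1) \<Rightarrow> 'b set \<Rightarrow> 'd set \<Rightarrow> bool" where
  "bounded_degree_mod \<phi> A P \<longleftrightarrow>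
     (\<exists>n::nat. \<forall>a\<in>A. \<exists>g::'d poly. (\<exists>i. coeff g i \<notin> P) \<and> (\<forall>i>n. coeff g i \<in> P) \<and>
        peval (\<phi> \<circ> to_K) g a \<in> ext_ideal \<phi> A P)"

end

theory Submission
  imports Defs "Jordan_Normal_Form.Char_Poly"
begin
lemma tK_add[simp]: "to_K (a + b) = to_K a + to_K b"
  by (simp add: to_K_def)
lemma tK_mult[simp]: "to_K (a * b) = to_K a * to_K b"
  by (simp add: to_K_def)
lemma tK_0[simp]: "to_K 0 = 0"
  by (simp add: to_K_def Zero_fract_def)
lemma tK_1[simp]: "to_K 1 = 1"
  by (simp add: to_K_def One_fract_def)
lemma tK_minus[simp]: "to_K (- a) = - to_K a"
  by (simp add: to_K_def)
lemma tK_diff[simp]: "to_K (a - b) = to_K a - to_K b"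
  by (simp add: to_K_def)
lemma tK_eq_iff[simp]: "to_K a = to_K b \<longleftrightarrow> a = b"
  by (simp add: to_K_def eq_fract)
lemma tK_eq_0[simp]: "to_K a = 0 \<longleftrightarrow> a = 0"
  using tK_eq_iff[of a 0] by simp
lemma tK_power[simp]: "to_K (a ^ n) = to_K a ^ n"
  by (induct n) auto
lemma tK_prod: "to_K (prod f S) = prod (\<lambda>x. to_K (f x)) S"
  by (induct S rule: infinite_finite_induct) auto
lemma tK_sum: "to_K (sum f S) = sum (\<lambda>x. to_K (f x)) S"
  by (induct S rule: infinite_finite_induct) auto
lemma Fract_tK: "b \<noteq> 0 \<Longrightarrow> Fraction_Field.Fract a b = to_K a / to_K b"
  by (simp add: to_K_def divide_fract_def inverse_fract mult_fract)

interpretation tKhom: comm_ring_hom to_K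
  by unfold_locales auto

lemma ideal_0: "is_ideal I \<Longrightarrow> 0 \<in> I" by (simp add: is_ideal_def)
lemma ideal_add: "is_ideal I \<Longrightarrow> x \<in> I \<Longrightarrow> y \<in> I \<Longrightarrow> x + y \<in> I" by (simp add: is_ideal_def)
lemma ideal_multL: "is_ideal I \<Longrightarrow> x \<in> I \<Longrightarrow> r * x \<in> I" by (simp add: is_ideal_def)
lemma ideal_multR: "is_ideal I \<Longrightarrow> x \<in> I \<Longrightarrow> x * r \<in> I" by (metis ideal_multL mult.commute)
lemma ideal_uminus: "is_ideal I \<Longrightarrow> x \<in> I \<Longrightarrow> - x \<in> I"
  using ideal_multL[of I x "-1"] by simp
lemma ideal_diff: "is_ideal I \<Longrightarrow> x \<in> I \<Longrightarrow> y \<in> I \<Longrightarrow> x - y \<in> I"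
  using ideal_add[of I x "-y"] ideal_uminus[of I y] by simp
lemma ideal_sum: "is_ideal I \<Longrightarrow> (\<And>i. i \<in> S \<Longrightarrow> f i \<in> I) \<Longrightarrow> sum f S \<in> I"
  by (induct S rule: infinite_finite_induct) (auto simp: ideal_0 ideal_add)
lemma ideal_1: "is_ideal I \<Longrightarrow> 1 \<in> I \<Longrightarrow> I = UNIV"
  using ideal_multL[of I 1] by auto

locale dsetup =
  fixes P :: "'d::idom set"
  assumes ded: "dedekind_domain TYPE('d)" and prim: "is_prime_ideal P" and nz: "P \<noteq> {0}"
begin

lemma idP: "is_ideal P" using prim by (simp add: is_prime_ideal_def)
lemma P0: "0 \<in> P" using idP ideal_0 by blast
lemma P_add: "x \<in> P \<Longrightarrow> y \<in> P \<Longrightarrow> x + y \<in> P" using idP ideal_add by blast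
lemma P_diff: "x \<in> P \<Longrightarrow> y \<in> P \<Longrightarrow> x - y \<in> P" using idP ideal_diff by blast
lemma P_uminus: "x \<in> P \<Longrightarrow> - x \<in> P" using idP ideal_uminus by blast
lemma P_multL: "x \<in> P \<Longrightarrow> r * x \<in> P" using idP ideal_multL by blast
lemma P_multR: "x \<in> P \<Longrightarrow> x * r \<in> P" using idP ideal_multR by blast
lemma P_1: "1 \<notin> P" using idP ideal_1 prim is_prime_ideal_def by blast
lemma P_prime: "x * y \<in> P \<Longrightarrow> x \<in> P \<or> y \<in> P" using prim is_prime_ideal_def by blast
lemma nP_nz: "s \<notin> P \<Longrightarrow> s \<noteq> 0" using P0 by auto
lemma nP_mult: "s \<notin> P \<Longrightarrow> t \<notin> P \<Longrightarrow> s * t \<notin> P" using P_prime by blast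
lemma nP_prod: "finite S \<Longrightarrow> (\<And>i. i \<in> S \<Longrightarrow> f i \<notin> P) \<Longrightarrow> prod f S \<notin> P"
  by (induct S rule: finite_induct) (auto simp: P_1 nP_mult)
lemma P_sum: "(\<And>i. i \<in> S \<Longrightarrow> f i \<in> P) \<Longrightarrow> sum f S \<in> P"
  using idP ideal_sum by blast

lemma maxP: "is_maximal_ideal P"
  using ded prim nz unfolding dedekind_domain_def by blast

lemma P_inv: assumes "s \<notin> P" shows "\<exists>t p. p \<in> P \<and> 1 = p + s * t"
proof -
  define J where "J = {x. \<exists>p t. p \<in> P \<and> x = p + s * t}"
  have "is_ideal J" unfolding J_def is_ideal_def
  proof (intro conjI ballI allI)
    show "0 \<in> {x. \<exists>p t. p \<in> P \<and> x = p + s * t}" using P0 by force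
  next
    fix x y assume "x \<in> {x. \<exists>p t. p \<in> P \<and> x = p + s * t}" "y \<in> {x. \<exists>p t. p \<in> P \<and> x = p + s * t}"
    then obtain p1 t1 p2 t2 where "x = p1 + s * t1" "y = p2 + s * t2" "p1 \<in> P" "p2 \<in> P" by auto
    then have "x + y = (p1 + p2) + s * (t1 + t2)" "p1 + p2 \<in> P" by (auto simp: algebra_simps P_add)
    then show "x + y \<in> {x. \<exists>p t. p \<in> P \<and> x = p + s * t}" by blast
  next
    fix r x assume "x \<in> {x. \<exists>p t. p \<in> P \<and> x = p + s * t}"
    then obtain p1 t1 where "x = p1 + s * t1" "p1 \<in> P" by auto
    then have "r * x = (r * p1) + s * (r * t1)" "r * p1 \<in> P" by (auto simp: algebra_simps P_multL P_multR)
    then show "r * x \<in> {x. \<exists>p t. p \<in> P \<and> x = p + s * t}" by blast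
  qed
  moreover have "P \<subseteq> J" unfolding J_def
  proof
    fix p assume "p \<in> P" then have "p = p + s * 0" by simp
    then show "p \<in> {x. \<exists>p t. p \<in> P \<and> x = p + s * t}" using \<open>p \<in> P\<close> by blast
  qed
  moreover have "s \<in> J" unfolding J_def
  proof -
    have "s = 0 + s * 1" by simp
    then show "s \<in> {x. \<exists>p t. p \<in> P \<and> x = p + s * t}" using P0 by blast
  qed
  ultimately have "J = UNIV" using maxP assms unfolding is_maximal_ideal_def by blast
  then have "1 \<in> J" by simp
  then show ?thesis unfolding J_def by auto
qed

lemma noeth: assumes "is_ideal (I::'d set)" shows "\<exists>S. finite S \<and> I = ideal_span S"
proof -
  have "noetherian_ring TYPE('d)" using ded unfolding dedekind_domain_def by (elim conjE)
  from this[unfolded noetherian_ring_def, rule_format, OF assms] show ?thesis .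
qed

lemma intcl: assumes "lead_coeff (f::'d poly) = 1" "poly (map_poly to_K f) x = 0" shows "\<exists>d. x = to_K d"
proof -
  have "integrally_closed TYPE('d)" using ded unfolding dedekind_domain_def by (elim conjE)
  from this[unfolded integrally_closed_def, rule_format, OF conjI[OF assms]] show ?thesis .
qed

definition DP :: "'d fract set" where "DP = loc_D P"
definition PP :: "'d fract set" where "PP = {to_K x / to_K s | x s. x \<in> P \<and> s \<notin> P}"

lemma DP_iff: "z \<in> DP \<longleftrightarrow> (\<exists>x s. s \<notin> P \<and> z = to_K x / to_K s)"
proof
  assume "z \<in> DP"
  then obtain x s where "s \<notin> P" "z = Fraction_Field.Fract x s" unfolding DP_def loc_D_def by blast
  then show "\<exists>x s. s \<notin> P \<and> z = to_K x / to_K s" using Fract_tK nP_nz by blast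
next
  assume "\<exists>x s. s \<notin> P \<and> z = to_K x / to_K s"
  then obtain x s where "s \<notin> P" "z = to_K x / to_K s" by blast
  then have "z = Fraction_Field.Fract x s" using Fract_tK nP_nz by metis
  then show "z \<in> DP" unfolding DP_def loc_D_def using \<open>s \<notin> P\<close> by blast
qed

lemma DP_intro: "s \<notin> P \<Longrightarrow> to_K x / to_K s \<in> DP" unfolding DP_iff by blast
lemma DP_tK[simp]: "to_K x \<in> DP" using DP_intro[OF P_1, of x] by simp
lemma DP_0[simp]: "0 \<in> DP" using DP_tK[of 0] by simp
lemma DP_1[simp]: "1 \<in> DP" using DP_tK[of 1] by simp
lemma DP_inv_tK: "s \<notin> P \<Longrightarrow> inverse (to_K s) \<in> DP"
  using DP_intro[of s 1] by (simp add: field_simps)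
lemma DP_add: assumes "z \<in> DP" "w \<in> DP" shows "z + w \<in> DP"
proof -
  obtain x s y t where "s \<notin> P" "t \<notin> P" "z = to_K x / to_K s" "w = to_K y / to_K t"
    using assms DP_iff by metis
  then have "z + w = to_K (x * t + y * s) / to_K (s * t)" "s * t \<notin> P"
    using nP_nz nP_mult by (auto simp: field_simps)
  then show ?thesis using DP_intro by metis
qed
lemma DP_mult: assumes "z \<in> DP" "w \<in> DP" shows "z * w \<in> DP"
proof -
  obtain x s y t where "s \<notin> P" "t \<notin> P" "z = to_K x / to_K s" "w = to_K y / to_K t"
    using assms DP_iff by metis
  then have "z * w = to_K (x * y) / to_K (s * t)" "s * t \<notin> P"
    using nP_mult by (auto simp: times_divide_times_eq)
  then show ?thesis using DP_intro by metis
qed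
lemma DP_uminus: "z \<in> DP \<Longrightarrow> - z \<in> DP"
  using DP_mult[OF DP_tK[of "-1"], of z] by simp
lemma DP_diff: "z \<in> DP \<Longrightarrow> w \<in> DP \<Longrightarrow> z - w \<in> DP"
  using DP_add[of z "-w"] DP_uminus by simp
lemma DP_sum: "(\<And>i. i \<in> S \<Longrightarrow> f i \<in> DP) \<Longrightarrow> sum f S \<in> DP"
  by (induct S rule: infinite_finite_induct) (auto simp: DP_add)
lemma DP_power: "z \<in> DP \<Longrightarrow> z ^ n \<in> DP"
  by (induct n) (auto simp: DP_mult)

lemma PP_DP: "z \<in> PP \<Longrightarrow> z \<in> DP" unfolding PP_def DP_iff by auto
lemma PP_intro: "x \<in> P \<Longrightarrow> s \<notin> P \<Longrightarrow> to_K x / to_K s \<in> PP" unfolding PP_def by blast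
lemma PP_tK: "p \<in> P \<Longrightarrow> to_K p \<in> PP" using PP_intro[OF _ P_1, of p] by simp
lemma PP_0[simp]: "0 \<in> PP" using PP_tK[OF P0] by simp
lemma PP_add: assumes "z \<in> PP" "w \<in> PP" shows "z + w \<in> PP"
proof -
  obtain x s y t where "x \<in> P" "y \<in> P" "s \<notin> P" "t \<notin> P" "z = to_K x / to_K s" "w = to_K y / to_K t"
    using assms unfolding PP_def by blast
  then have "z + w = to_K (x * t + y * s) / to_K (s * t)" "s * t \<notin> P" "x * t + y * s \<in> P"
    using nP_nz nP_mult by (auto simp: field_simps intro!: P_add P_multR P_multL)
  then show ?thesis using PP_intro by metis
qed
lemma PP_mult: assumes "z \<in> DP" "w \<in> PP" shows "z * w \<in> PP"
proof -
  obtain x s y t where "y \<in> P" "s \<notin> P" "t \<notin> P" "z = to_K x / to_K s" "w = to_K y / to_K t"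
    using assms unfolding PP_def DP_iff by blast
  then have "z * w = to_K (x * y) / to_K (s * t)" "s * t \<notin> P" "x * y \<in> P"
    using nP_mult by (auto simp: times_divide_times_eq P_multL)
  then show ?thesis using PP_intro by metis
qed
lemma PP_tK_iff: "to_K d \<in> PP \<longleftrightarrow> d \<in> P"
proof
  assume "to_K d \<in> PP"
  then obtain x s where "x \<in> P" "s \<notin> P" "to_K d = to_K x / to_K s" unfolding PP_def by auto
  then have "to_K d * to_K s = to_K x" using nP_nz by (simp add: field_simps)
  then have "d * s = x" by (metis tK_mult tK_eq_iff)
  then have "d * s \<in> P" using \<open>x \<in> P\<close> by simp
  then show "d \<in> P" using P_prime \<open>s \<notin> P\<close> by blast
qed (rule PP_tK)
lemma one_nPP: "1 \<notin> PP" using PP_tK_iff[of 1] P_1 by simp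
lemma DP_unit: assumes "z \<in> DP" "z \<notin> PP" shows "inverse z \<in> DP" "z \<noteq> 0"
proof -
  obtain x s where xs: "s \<notin> P" "z = to_K x / to_K s" using assms DP_iff by auto
  have "x \<notin> P" using assms xs unfolding PP_def by auto
  then have "inverse z = to_K s / to_K x" using xs by simp
  then show "inverse z \<in> DP" using DP_intro[OF \<open>x \<notin> P\<close>] by simp
  show "z \<noteq> 0" using assms by auto
qed

end

context dsetup begin

lemma span_mem: assumes "finite S" "s \<in> S" shows "s \<in> ideal_span S"
proof -
  have "(\<Sum>s'\<in>S. (if s' = s then 1 else 0) * s') = s"
  proof -
    have "(\<Sum>s'\<in>S. (if s' = s then 1 else 0) * s') = (\<Sum>s'\<in>S. if s' = s then s' else 0)"
      by (rule sum.cong) auto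
    also have "\<dots> = s" using assms by (simp add: sum.delta)
    finally show ?thesis .
  qed
  then show ?thesis unfolding ideal_span_def
    by (intro CollectI exI[of _ "\<lambda>s'. if s' = s then 1 else 0"]) (rule sym)
qed

lemma IL:
  assumes LD: "L \<subseteq> DP"
    and Ladd: "\<And>a b. a \<in> L \<Longrightarrow> b \<in> L \<Longrightarrow> a + b \<in> L"
    and Lmult: "\<And>z a. z \<in> DP \<Longrightarrow> a \<in> L \<Longrightarrow> z * a \<in> L"
    and y0: "y0 \<in> L" "y0 \<noteq> 0"
    and xL: "\<And>a. a \<in> L \<Longrightarrow> x * a \<in> L"
  shows "x \<in> DP"
proof -
  define I where "I = {d. to_K d \<in> L}"
  have "is_ideal I" unfolding is_ideal_def I_def
  proof (intro conjI ballI allI)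
    show "0 \<in> {d. to_K d \<in> L}" using Lmult[OF DP_0 y0(1)] by simp
    show "x + y \<in> {d. to_K d \<in> L}" if "x \<in> {d. to_K d \<in> L}" "y \<in> {d. to_K d \<in> L}" for x y
      using that Ladd by simp
    show "r * x \<in> {d. to_K d \<in> L}" if "x \<in> {d. to_K d \<in> L}" for r x
      using that Lmult[OF DP_tK[of r]] by simp
  qed
  then obtain S where S: "finite S" "I = ideal_span S" using noeth by blast
  obtain xs where xs: "distinct xs" "set xs = S" using finite_distinct_list[OF S(1)] by blast
  define m where "m = length xs"
  define l where "l k = to_K (xs ! k)" for k
  have bij: "bij_betw ((!) xs) {..<m} S" using bij_betw_nth[OF xs(1)] xs m_def by simp
  have lL: "l k \<in> L" if "k < m" for k
  proof -
    have "xs ! k \<in> S" using that xs m_def by auto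
    then show ?thesis using span_mem[OF S(1)] S(2) unfolding I_def l_def by blast
  qed
  have KF: "\<exists>t c. t \<notin> P \<and> to_K t * y = (\<Sum>k<m. to_K (c k) * l k)" if "y \<in> L" for y
  proof -
    have "y \<in> DP" using that LD by blast
    then obtain a t where at: "t \<notin> P" "y = to_K a / to_K t" unfolding DP_iff by blast
    have "to_K a = to_K t * y" using at nP_nz by simp
    then have "to_K a \<in> L" using Lmult[OF DP_tK that] by simp
    then have "a \<in> I" using I_def by simp
    then have "a \<in> ideal_span S" using S(2) by simp
    then have "\<exists>c. a = (\<Sum>s\<in>S. c s * s)" unfolding ideal_span_def by simp
    then obtain c where c: "a = (\<Sum>s\<in>S. c s * s)" by blast
    also have "\<dots> = (\<Sum>k<m. c (xs ! k) * xs ! k)"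
      using sum.reindex_bij_betw[OF bij, of "\<lambda>s. c s * s"] by simp
    finally have "to_K t * y = (\<Sum>k<m. to_K (c (xs ! k)) * l k)"
      using \<open>to_K a = to_K t * y\<close> by (simp add: tK_sum l_def)
    then show ?thesis using at by (intro exI[of _ t] exI[of _ "\<lambda>k. c (xs ! k)"]) simp
  qed
  have "\<forall>j. \<exists>tc. j < m \<longrightarrow> fst tc \<notin> P \<and> to_K (fst tc) * (x * l j) = (\<Sum>k<m. to_K (snd tc k) * l k)"
  proof
    fix j show "\<exists>tc. j < m \<longrightarrow> fst tc \<notin> P \<and> to_K (fst tc) * (x * l j) = (\<Sum>k<m. to_K (snd tc k) * l k)"
    proof (cases "j < m")
      case True
      then obtain t c where "t \<notin> P" "to_K t * (x * l j) = (\<Sum>k<m. to_K (c k) * l k)"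
        using KF[OF xL[OF lL]] by blast
      then show ?thesis by (intro exI[of _ "(t, c)"]) simp
    qed simp
  qed
  then obtain tc where tc: "\<And>j. j < m \<Longrightarrow> fst (tc j) \<notin> P \<and>
      to_K (fst (tc j)) * (x * l j) = (\<Sum>k<m. to_K (snd (tc j) k) * l k)"
    by metis
  define t where "t j = fst (tc j)" for j
  define c where "c j = snd (tc j)" for j
  have t: "t j \<notin> P" "to_K (t j) * (x * l j) = (\<Sum>k<m. to_K (c j k) * l k)" if "j < m" for j
    using tc[OF that] unfolding t_def c_def by auto
  define T0 where "T0 = (\<Prod>j<m. t j)"
  define Tj where "Tj j = (\<Prod>i\<in>{..<m} - {j}. t i)" for j
  have T0: "T0 \<notin> P" unfolding T0_def by (rule nP_prod) (auto simp: t)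
  have T0j: "T0 = t j * Tj j" if "j < m" for j
    unfolding T0_def Tj_def using that by (simp add: prod.remove)
  define B where "B = mat m m (\<lambda>(j, k). Tj j * c j k)"
  define v where "v = vec m l"
  have Bc: "B \<in> carrier_mat m m" unfolding B_def by simp
  have ev: "map_mat to_K B *\<^sub>v v = (to_K T0 * x) \<cdot>\<^sub>v v"
  proof (rule eq_vecI)
    show "dim_vec (map_mat to_K B *\<^sub>v v) = dim_vec ((to_K T0 * x) \<cdot>\<^sub>v v)" by (simp add: B_def v_def)
    fix j assume "j < dim_vec ((to_K T0 * x) \<cdot>\<^sub>v v)"
    then have j: "j < m" by (simp add: v_def)
    have "(map_mat to_K B *\<^sub>v v) $ j = (\<Sum>k<m. to_K (Tj j * c j k) * l k)"
      using j by (simp add: B_def v_def scalar_prod_def lessThan_atLeast0)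
    also have "\<dots> = to_K (Tj j) * (\<Sum>k<m. to_K (c j k) * l k)"
      by (simp add: sum_distrib_left mult.assoc)
    also have "\<dots> = to_K (Tj j) * (to_K (t j) * (x * l j))" using t[OF j] by simp
    also have "\<dots> = to_K T0 * x * l j" using T0j[OF j] by (simp add: ac_simps)
    also have "\<dots> = ((to_K T0 * x) \<cdot>\<^sub>v v) $ j" using j by (simp add: v_def)
    finally show "(map_mat to_K B *\<^sub>v v) $ j = ((to_K T0 * x) \<cdot>\<^sub>v v) $ j" .
  qed
  have vnz: "v \<noteq> 0\<^sub>v m"
  proof
    assume v0: "v = 0\<^sub>v m"
    have "l k = 0" if "k < m" for k
    proof -
      have "v $ k = 0" using v0 that by simp
      then show ?thesis using that by (simp add: v_def)
    qed
    moreover obtain t' c' where "t' \<notin> P" "to_K t' * y0 = (\<Sum>k<m. to_K (c' k) * l k)"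
      using KF[OF y0(1)] by blast
    ultimately have "to_K t' * y0 = 0" by simp
    then show False using y0(2) \<open>t' \<notin> P\<close> nP_nz by simp
  qed
  have "eigenvector (map_mat to_K B) v (to_K T0 * x)"
    unfolding eigenvector_def using ev vnz Bc by (simp add: v_def)
  then have "eigenvalue (map_mat to_K B) (to_K T0 * x)" unfolding eigenvalue_def by blast
  then have "poly (char_poly (map_mat to_K B)) (to_K T0 * x) = 0"
    using eigenvalue_root_char_poly[of "map_mat to_K B" m] Bc by simp
  then have "poly (map_poly to_K (char_poly B)) (to_K T0 * x) = 0"
    using tKhom.char_poly_hom[OF Bc] by simp
  moreover have "lead_coeff (char_poly B) = 1" using degree_monic_char_poly[OF Bc] by simp
  ultimately obtain d where "to_K T0 * x = to_K d" using intcl by blast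
  then have "x = to_K d / to_K T0" using T0 nP_nz by (simp add: field_simps)
  then show ?thesis using DP_intro[OF T0] by simp
qed

end

fun prodset :: "'a::comm_ring_1 set list \<Rightarrow> 'a set" where
  "prodset [] = {1}"
| "prodset (Q # Qs) = {q * b | q b. q \<in> Q \<and> b \<in> prodset Qs}"

lemma prodset_append:
  "x \<in> prodset (Qs1 @ Qs2) \<Longrightarrow> \<exists>a b. a \<in> prodset Qs1 \<and> b \<in> prodset Qs2 \<and> x = a * b"
proof (induct Qs1 arbitrary: x)
  case Nil then show ?case by force
next
  case (Cons Q Qs)
  then obtain q c where qc: "q \<in> Q" "c \<in> prodset (Qs @ Qs2)" "x = q * c" by auto
  then obtain a b where ab: "a \<in> prodset Qs" "b \<in> prodset Qs2" "c = a * b" using Cons(1) by blast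
  have "q * a \<in> prodset (Q # Qs)" using qc ab by auto
  moreover have "x = (q * a) * b" using qc ab by (simp add: mult.assoc)
  ultimately show ?case using ab by blast
qed

lemma ideal_ext: assumes "is_ideal M" shows "is_ideal {m + x * r | m r. m \<in> M}"
  unfolding is_ideal_def
proof (intro conjI ballI allI)
  have "0 = 0 + x * 0" by simp
  then show "0 \<in> {m + x * r | m r. m \<in> M}" using ideal_0[OF assms] by blast
next
  fix a b assume "a \<in> {m + x * r | m r. m \<in> M}" "b \<in> {m + x * r | m r. m \<in> M}"
  then obtain m1 r1 m2 r2 where "a = m1 + x * r1" "b = m2 + x * r2" "m1 \<in> M" "m2 \<in> M" by blast
  then have "a + b = (m1 + m2) + x * (r1 + r2)" "m1 + m2 \<in> M"
    using ideal_add[OF assms] by (auto simp: algebra_simps)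
  then show "a + b \<in> {m + x * r | m r. m \<in> M}" by blast
next
  fix c a assume "a \<in> {m + x * r | m r. m \<in> M}"
  then obtain m1 r1 where "a = m1 + x * r1" "m1 \<in> M" by blast
  moreover have "c * m1 \<in> M" using ideal_multL[OF assms] \<open>m1 \<in> M\<close> by blast
  moreover have "c * a = (c * m1) + x * (c * r1)" using \<open>a = m1 + x * r1\<close> by (simp add: algebra_simps)
  ultimately show "c * a \<in> {m + x * r | m r. m \<in> M}" by blast
qed

context dsetup begin

definition good :: "'d set list \<Rightarrow> bool" where
  "good Qs \<longleftrightarrow> (\<forall>Q\<in>set Qs. is_prime_ideal Q \<and> Q \<noteq> {0})"

lemma PPL: assumes "is_ideal I" "I \<noteq> {0}" shows "\<exists>Qs. good Qs \<and> prodset Qs \<subseteq> I"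
proof (rule ccontr)
  assume nI: "\<not> ?thesis"
  define S where "S = {J. is_ideal J \<and> J \<noteq> {0} \<and> \<not> (\<exists>Qs. good Qs \<and> prodset Qs \<subseteq> J)}"
  have IS: "I \<in> S" using assms nI S_def by blast
  have "\<forall>C\<in>chains S. \<exists>U\<in>S. \<forall>X\<in>C. X \<subseteq> U"
  proof
    fix C assume C: "C \<in> chains S"
    show "\<exists>U\<in>S. \<forall>X\<in>C. X \<subseteq> U"
    proof (cases "C = {}")
      case True then show ?thesis using IS by blast
    next
      case False
      have CS: "C \<subseteq> S" using chainsD2[OF C] .
      have ch: "\<And>X Y. X \<in> C \<Longrightarrow> Y \<in> C \<Longrightarrow> X \<subseteq> Y \<or> Y \<subseteq> X" using chainsD[OF C] by blast
      define U where "U = \<Union>C"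
      have idU: "is_ideal U" unfolding is_ideal_def
      proof (intro conjI ballI allI)
        obtain X where "X \<in> C" using False by blast
        then show "0 \<in> U" unfolding U_def using CS S_def ideal_0 by blast
      next
        fix a b assume "a \<in> U" "b \<in> U"
        then obtain X Y where XY: "X \<in> C" "Y \<in> C" "a \<in> X" "b \<in> Y" unfolding U_def by blast
        have "is_ideal X" "is_ideal Y" using XY CS S_def by auto
        then have "a + b \<in> X \<or> a + b \<in> Y" using ch[OF XY(1,2)] XY ideal_add by blast
        then show "a + b \<in> U" unfolding U_def using XY by blast
      next
        fix r a assume "a \<in> U"
        then obtain X where X: "X \<in> C" "a \<in> X" unfolding U_def by blast
        have "is_ideal X" using X CS S_def by auto
        then show "r * a \<in> U" using X ideal_multL unfolding U_def by blast
      qed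
      obtain T where T: "finite T" "U = ideal_span T" using noeth[OF idU] by blast
      have "subset.chain C C" unfolding subset_chain_def using ch by blast
      moreover have "T \<subseteq> \<Union>C"
      proof
        fix t assume "t \<in> T"
        then have "t \<in> ideal_span T" using span_mem[OF T(1)] by blast
        then show "t \<in> \<Union>C" using T U_def by simp
      qed
      ultimately obtain M0 where M0: "M0 \<in> C" "T \<subseteq> M0"
        using finite_subset_Union_chain[OF T(1) _ False] by blast
      have idM0: "is_ideal M0" using M0 CS S_def by auto
      have "U \<subseteq> M0"
      proof
        fix u assume "u \<in> U"
        then have "u \<in> ideal_span T" using T by simp
        then have "\<exists>c. u = (\<Sum>s\<in>T. c s * s)" unfolding ideal_span_def by simp
        then obtain c where c: "u = (\<Sum>s\<in>T. c s * s)" by blast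
        have "(\<Sum>s\<in>T. c s * s) \<in> M0"
        proof (rule ideal_sum[OF idM0])
          fix s assume "s \<in> T" then show "c s * s \<in> M0" using ideal_multL[OF idM0] M0(2) by blast
        qed
        then show "u \<in> M0" using c by simp
      qed
      moreover have "M0 \<subseteq> U" using M0 U_def by blast
      ultimately have "U = M0" by blast
      then have "U \<in> S" using M0 CS by blast
      then show ?thesis unfolding U_def by blast
    qed
  qed
  from Zorn_Lemma2[OF this] obtain M where M: "M \<in> S" and Mmax: "\<And>X. X \<in> S \<Longrightarrow> M \<subseteq> X \<Longrightarrow> X = M"
    by blast
  have idM: "is_ideal M" and M0: "M \<noteq> {0}" and noQ: "\<And>Qs. good Qs \<Longrightarrow> \<not> prodset Qs \<subseteq> M"
    using M S_def by auto
  have "M \<noteq> UNIV"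
  proof
    assume "M = UNIV"
    moreover have "good [P]" using prim nz good_def by simp
    ultimately show False using noQ by blast
  qed
  moreover have "\<not> is_prime_ideal M"
  proof
    assume "is_prime_ideal M"
    then have "good [M]" using M0 good_def by simp
    moreover have "prodset [M] \<subseteq> M" by auto
    ultimately show False using noQ by blast
  qed
  ultimately obtain x y where xy: "x * y \<in> M" "x \<notin> M" "y \<notin> M"
    using idM unfolding is_prime_ideal_def by blast
  have ext: "\<exists>Qs. good Qs \<and> prodset Qs \<subseteq> {m + z * r | m r. m \<in> M}" if "z \<notin> M" for z
  proof (rule ccontr)
    assume a: "\<not> ?thesis"
    define M1 where "M1 = {m + z * r | m r. m \<in> M}"
    have "is_ideal M1" using ideal_ext[OF idM] M1_def by simp
    have sub: "M \<subseteq> M1"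
    proof
      fix m assume "m \<in> M"
      moreover have "m = m + z * 0" by simp
      ultimately show "m \<in> M1" unfolding M1_def by blast
    qed
    have "z \<in> M1"
    proof -
      have "z = 0 + z * 1" by simp
      then show ?thesis unfolding M1_def using ideal_0[OF idM] by blast
    qed
    have "M1 \<noteq> {0}" using sub M0 ideal_0[OF idM] by blast
    then have "M1 \<in> S" using a \<open>is_ideal M1\<close> S_def M1_def by blast
    then have "M1 = M" using Mmax sub by blast
    then show False using \<open>z \<in> M1\<close> that by blast
  qed
  obtain Qs1 where Q1: "good Qs1" "prodset Qs1 \<subseteq> {m + x * r | m r. m \<in> M}" using ext[OF xy(2)] by blast
  obtain Qs2 where Q2: "good Qs2" "prodset Qs2 \<subseteq> {m + y * r | m r. m \<in> M}" using ext[OF xy(3)] by blast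
  have "good (Qs1 @ Qs2)" using Q1 Q2 good_def by auto
  moreover have "prodset (Qs1 @ Qs2) \<subseteq> M"
  proof
    fix w assume "w \<in> prodset (Qs1 @ Qs2)"
    then obtain a b where ab: "a \<in> prodset Qs1" "b \<in> prodset Qs2" "w = a * b" using prodset_append by blast
    obtain m1 r1 where 1: "a = m1 + x * r1" "m1 \<in> M" using ab Q1 by blast
    obtain m2 r2 where 2: "b = m2 + y * r2" "m2 \<in> M" using ab Q2 by blast
    have "w = m1 * b + m2 * (x * r1) + (x * y) * (r1 * r2)" using ab 1 2 by (simp add: algebra_simps)
    moreover have "m1 * b \<in> M" "m2 * (x * r1) \<in> M" "(x * y) * (r1 * r2) \<in> M"
      using 1 2 xy ideal_multR[OF idM] by auto
    ultimately show "w \<in> M" using ideal_add[OF idM] by metis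
  qed
  ultimately show False using noQ by blast
qed

definition saturated :: "'d set \<Rightarrow> bool" where
  "saturated J \<longleftrightarrow> (\<forall>s y. s \<notin> P \<longrightarrow> s * y \<in> J \<longrightarrow> y \<in> J)"

lemma filter_P:
  assumes "good Qs" "saturated J" "prodset Qs \<subseteq> J"
  shows "prodset (filter (\<lambda>Q. P = Q) Qs) \<subseteq> J"
  using assms
proof (induct Qs arbitrary: J)
  case Nil then show ?case by simp
next
  case (Cons Q Qs)
  have gQ: "good Qs" using Cons(2) good_def by simp
  have Qmax: "is_maximal_ideal Q" using Cons(2) ded unfolding good_def dedekind_domain_def by simp
  show ?case
  proof (cases "P = Q")
    case False
    have "\<not> Q \<subseteq> P"
    proof
      assume "Q \<subseteq> P"
      then have "P = Q \<or> P = UNIV" using Qmax idP unfolding is_maximal_ideal_def by blast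
      then show False using False P_1 by auto
    qed
    then obtain s where s: "s \<in> Q" "s \<notin> P" by blast
    have "prodset Qs \<subseteq> J"
    proof
      fix b assume "b \<in> prodset Qs"
      then have "s * b \<in> J" using Cons(4) s by auto
      then show "b \<in> J" using Cons(3) s saturated_def by blast
    qed
    then show ?thesis using Cons(1)[OF gQ Cons(3)] False by simp
  next
    case True
    have "prodset (filter (\<lambda>Q. P = Q) Qs) \<subseteq> {y. q * y \<in> J}" if q: "q \<in> P" for q
    proof (rule Cons(1)[OF gQ])
      show "saturated {y. q * y \<in> J}" using Cons(3) unfolding saturated_def
        by (metis mem_Collect_eq mult.left_commute)
      show "prodset Qs \<subseteq> {y. q * y \<in> J}" using Cons(4) q True by auto
    qed
    then show ?thesis using True by auto
  qed
qed

lemma K1: "\<exists>\<pi>. \<pi> \<in> P \<and> \<pi> \<noteq> 0 \<and> (\<forall>p\<in>P. to_K p / to_K \<pi> \<in> DP)"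
proof -
  obtain b where b: "b \<in> P" "b \<noteq> 0" using nz P0 by blast
  define I where "I = {y. to_K y / to_K b \<in> DP}"
  have idI: "is_ideal I" unfolding is_ideal_def I_def
  proof (intro conjI ballI allI)
    show "0 \<in> {y. to_K y / to_K b \<in> DP}" by simp
    show "x + y \<in> {y. to_K y / to_K b \<in> DP}" if "x \<in> {y. to_K y / to_K b \<in> DP}" "y \<in> {y. to_K y / to_K b \<in> DP}" for x y
      using that DP_add by (simp add: add_divide_distrib)
    show "r * x \<in> {y. to_K y / to_K b \<in> DP}" if "x \<in> {y. to_K y / to_K b \<in> DP}" for r x
    proof -
      have eq: "to_K (r * x) / to_K b = to_K r * (to_K x / to_K b)" by simp
      from that have h: "to_K x / to_K b \<in> DP" by simp
      have "to_K r * (to_K x / to_K b) \<in> DP" by (rule DP_mult[OF DP_tK h])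
      then show ?thesis by (simp only: mem_Collect_eq eq)
    qed
  qed
  have satI: "saturated I" unfolding saturated_def I_def
  proof (intro allI impI)
    fix s y assume s: "s \<notin> P" "s * y \<in> {y. to_K y / to_K b \<in> DP}"
    then have h: "to_K (s * y) / to_K b \<in> DP" by simp
    have "inverse (to_K s) * (to_K (s * y) / to_K b) \<in> DP" by (rule DP_mult[OF DP_inv_tK[OF s(1)] h])
    moreover have "inverse (to_K s) * (to_K (s * y) / to_K b) = to_K y / to_K b"
      using s(1) nP_nz[OF s(1)] by (simp add: field_simps)
    ultimately show "y \<in> {y. to_K y / to_K b \<in> DP}" by (simp only: mem_Collect_eq)
  qed
  have "b \<in> I" using b I_def by simp
  then have "I \<noteq> {0}" using b by blast
  then obtain Qs where Qs: "good Qs" "prodset Qs \<subseteq> I" using PPL[OF idI] by blast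
  have "prodset (filter (\<lambda>Q. P = Q) Qs) \<subseteq> I" using filter_P[OF Qs(1) satI Qs(2)] .
  then have ex: "\<exists>k. prodset (replicate k P) \<subseteq> I" by (metis replicate_length_filter)
  define k0 where "k0 = (LEAST k. prodset (replicate k P) \<subseteq> I)"
  have k0: "prodset (replicate k0 P) \<subseteq> I" unfolding k0_def using LeastI_ex[OF ex] .
  have IP: "I \<subseteq> P"
  proof
    fix y assume "y \<in> I"
    then obtain x s where xs: "s \<notin> P" "to_K y / to_K b = to_K x / to_K s" unfolding I_def DP_iff by blast
    then have "to_K (y * s) = to_K (x * b)" using b nP_nz by (simp add: field_simps)
    then have "y * s = x * b" by (metis tK_eq_iff)
    then have "y * s \<in> P" using b P_multL by simp
    then show "y \<in> P" using P_prime xs by blast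
  qed
  have "k0 \<noteq> 0"
  proof
    assume "k0 = 0"
    then have "1 \<in> I" using k0 by simp
    then show False using IP P_1 by blast
  qed
  then obtain k' where k': "k0 = Suc k'" using not0_implies_Suc by blast
  have "\<not> prodset (replicate k' P) \<subseteq> I"
  proof
    assume "prodset (replicate k' P) \<subseteq> I"
    then have "k0 \<le> k'" unfolding k0_def by (rule Least_le)
    then show False using k' by simp
  qed
  then obtain a where a: "a \<in> prodset (replicate k' P)" "a \<notin> I" by blast
  have aP: "p * a \<in> I" if "p \<in> P" for p
    using k0 k' a(1) that by auto
  define x where "x = to_K a / to_K b"
  have xD: "x \<notin> DP" using a(2) unfolding x_def I_def by simp
  have xP: "x * to_K p \<in> DP" if "p \<in> P" for p
  proof -
    have "to_K (p * a) / to_K b \<in> DP" using aP[OF that] I_def by simp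
    then show ?thesis unfolding x_def by (simp add: field_simps)
  qed
  have "\<exists>p0\<in>P. x * to_K p0 \<notin> PP"
  proof (rule ccontr)
    assume "\<not> ?thesis"
    then have xPP: "x * to_K p \<in> PP" if "p \<in> P" for p using that by blast
    have "x \<in> DP"
    proof (rule IL[of PP "to_K b"])
      show "PP \<subseteq> DP" using PP_DP by blast
      show "a + c \<in> PP" if "a \<in> PP" "c \<in> PP" for a c using PP_add that by blast
      show "z * a \<in> PP" if "z \<in> DP" "a \<in> PP" for z a using PP_mult that by blast
      show "to_K b \<in> PP" using PP_tK b by blast
      show "to_K b \<noteq> 0" using b by simp
      show "x * a \<in> PP" if "a \<in> PP" for a
      proof -
        have "a \<in> {to_K x / to_K s | x s. x \<in> P \<and> s \<notin> P}" using that unfolding PP_def .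
        then obtain p s where ps: "p \<in> P" "s \<notin> P" "a = to_K p / to_K s" by blast
        have "x * a = inverse (to_K s) * (x * to_K p)" using ps by (simp add: field_simps)
        then show ?thesis using PP_mult[OF DP_inv_tK[OF ps(2)] xPP[OF ps(1)]] by (simp only:)
      qed
    qed
    then show False using xD by blast
  qed
  then obtain p0 where p0: "p0 \<in> P" "x * to_K p0 \<notin> PP" by blast
  define u where "u = x * to_K p0"
  have uD: "u \<in> DP" using xP[OF p0(1)] u_def by simp
  have u: "inverse u \<in> DP" "u \<noteq> 0" using DP_unit[OF uD] p0(2) u_def by auto
  then have x0: "x \<noteq> 0" and p00: "p0 \<noteq> 0" using u_def by auto
  have "to_K p / to_K p0 \<in> DP" if "p \<in> P" for p
  proof -
    have "to_K p / to_K p0 = (x * to_K p) * inverse u" using x0 p00 u_def by (simp add: field_simps)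
    then show ?thesis using DP_mult[OF xP[OF that] u(1)] by simp
  qed
  then show ?thesis using p0(1) p00 by blast
qed

end

definition chom :: "('k::comm_ring_1 \<Rightarrow> 'b::ring_1) \<Rightarrow> bool" where
  "chom \<psi> \<longleftrightarrow> \<psi> 0 = 0 \<and> \<psi> 1 = 1 \<and> (\<forall>x y. \<psi> (x + y) = \<psi> x + \<psi> y) \<and>
     (\<forall>x y. \<psi> (x * y) = \<psi> x * \<psi> y) \<and> (\<forall>x c. \<psi> x * c = c * \<psi> x)"

context
  fixes \<psi> :: "'k::comm_ring_1 \<Rightarrow> 'b::ring_1"
  assumes ch: "chom \<psi>"
begin

lemma ch0[simp]: "\<psi> 0 = 0" using ch[unfolded chom_def] by (rule conjunct1)
lemma ch1[simp]: "\<psi> 1 = 1" using ch[unfolded chom_def, THEN conjunct2] by (rule conjunct1)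
lemma chadd[simp]: "\<psi> (x + y) = \<psi> x + \<psi> y" using ch[unfolded chom_def, THEN conjunct2, THEN conjunct2, THEN conjunct1] by blast
lemma chmult[simp]: "\<psi> (x * y) = \<psi> x * \<psi> y" using ch[unfolded chom_def, THEN conjunct2, THEN conjunct2, THEN conjunct2, THEN conjunct1] by blast
lemma chcomm: "\<psi> x * c = c * \<psi> x" using ch[unfolded chom_def, THEN conjunct2, THEN conjunct2, THEN conjunct2, THEN conjunct2] by blast
lemma chminus[simp]: "\<psi> (- x) = - \<psi> x"
  using chadd[of x "-x"] neg_eq_iff_add_eq_0[of "\<psi> x" "\<psi> (-x)"] by simp
lemma chdiff[simp]: "\<psi> (x - y) = \<psi> x - \<psi> y"
  using chadd[of x "-y"] by simp
lemma chsum: "\<psi> (sum f S) = (\<Sum>i\<in>S. \<psi> (f i))"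
  by (induct S rule: infinite_finite_induct) auto
lemma chpow[simp]: "\<psi> (x ^ n) = \<psi> x ^ n"
  by (induct n) auto

lemma peval_le: assumes "degree f \<le> N" shows "peval \<psi> f b = (\<Sum>i\<le>N. \<psi> (coeff f i) * b ^ i)"
proof -
  have "(\<Sum>i\<le>N. \<psi> (coeff f i) * b ^ i) = (\<Sum>i\<le>degree f. \<psi> (coeff f i) * b ^ i)"
  proof (rule sum.mono_neutral_right)
    show "\<forall>i\<in>{..N} - {..degree f}. \<psi> (coeff f i) * b ^ i = 0" by (auto simp: coeff_eq_0)
  qed (use assms in auto)
  then show ?thesis unfolding peval_def by simp
qed

lemma peval_add: "peval \<psi> (f + g) b = peval \<psi> f b + peval \<psi> g b"
proof -
  define N where "N = max (degree f) (degree g)"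
  have "degree (f + g) \<le> N" "degree f \<le> N" "degree g \<le> N"
    unfolding N_def using degree_add_le_max[of f g] by auto
  then show ?thesis by (simp add: peval_le sum.distrib distrib_right)
qed

lemma peval_minus: "peval \<psi> (- f) b = - peval \<psi> f b"
  unfolding peval_def by (simp add: sum_negf)

lemma peval_diff: "peval \<psi> (f - g) b = peval \<psi> f b - peval \<psi> g b"
  using peval_add[of f "-g"] peval_minus[of g] by simp

lemma peval_const: "peval \<psi> [:c:] b = \<psi> c"
  unfolding peval_def by simp

lemma peval_pCons: "peval \<psi> (pCons c p) b = \<psi> c + b * peval \<psi> p b"
proof -
  define N where "N = Suc (degree p)"
  have d: "degree (pCons c p) \<le> N" "degree p \<le> N" unfolding N_def by (auto simp: degree_pCons_le)
  have "peval \<psi> (pCons c p) b = (\<Sum>i\<le>N. \<psi> (coeff (pCons c p) i) * b ^ i)" using peval_le d by blast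
  also have "\<dots> = \<psi> c + (\<Sum>i<N. \<psi> (coeff p i) * b ^ Suc i)"
    unfolding N_def atMost_Suc lessThan_Suc_atMost[symmetric] sum.lessThan_Suc_shift by simp
  also have "(\<Sum>i<N. \<psi> (coeff p i) * b ^ Suc i) = (\<Sum>i<N. b * (\<psi> (coeff p i) * b ^ i))"
  proof (rule sum.cong)
    fix i
    have "\<psi> (coeff p i) * b ^ Suc i = (\<psi> (coeff p i) * b) * b ^ i" by (simp add: mult.assoc)
    also have "\<dots> = b * (\<psi> (coeff p i) * b ^ i)" by (simp add: chcomm mult.assoc)
    finally show "\<psi> (coeff p i) * b ^ Suc i = b * (\<psi> (coeff p i) * b ^ i)" .
  qed simp
  also have "\<dots> = b * (\<Sum>i<N. \<psi> (coeff p i) * b ^ i)" by (simp add: sum_distrib_left)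
  also have "(\<Sum>i<N. \<psi> (coeff p i) * b ^ i) = peval \<psi> p b"
    using peval_le[of p "degree p"] unfolding N_def lessThan_Suc_atMost by simp
  finally show ?thesis .
qed

lemma peval_smult: "peval \<psi> (Polynomial.smult c p) b = \<psi> c * peval \<psi> p b"
proof -
  have "degree (Polynomial.smult c p) \<le> degree p" by (rule degree_smult_le)
  then have "peval \<psi> (Polynomial.smult c p) b = (\<Sum>i\<le>degree p. \<psi> (coeff (Polynomial.smult c p) i) * b ^ i)"
    by (rule peval_le)
  also have "\<dots> = \<psi> c * (\<Sum>i\<le>degree p. \<psi> (coeff p i) * b ^ i)"
    by (simp add: sum_distrib_left mult.assoc)
  finally show ?thesis by (simp add: peval_def)
qed

lemma peval_0[simp]: "peval \<psi> 0 b = 0" unfolding peval_def by simp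

lemma peval_mult: "peval \<psi> (p * q) b = peval \<psi> p b * peval \<psi> q b"
proof (induct p rule: pCons_induct)
  case 0 then show ?case by simp
next
  case (pCons c p)
  have "pCons c p * q = Polynomial.smult c q + pCons 0 (p * q)" by simp
  then have "peval \<psi> (pCons c p * q) b = \<psi> c * peval \<psi> q b + b * peval \<psi> (p * q) b"
    by (simp add: peval_add peval_smult peval_pCons)
  also have "\<dots> = (\<psi> c + b * peval \<psi> p b) * peval \<psi> q b"
    using pCons(2) by (simp add: distrib_right mult.assoc)
  finally show ?case by (simp add: peval_pCons)
qed

lemma peval_one[simp]: "peval \<psi> 1 b = 1"
  using peval_const[of 1] by (simp add: one_pCons)

lemma peval_X: "peval \<psi> [:0, 1:] b = b"
  using peval_pCons[of 0 "[:1:]"] peval_const[of 1] by simp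

lemma peval_power: "peval \<psi> (p ^ n) b = peval \<psi> p b ^ n"
  by (induct n) (auto simp: peval_mult)

end

lemma chom_comp: assumes h: "chom \<psi>" shows "chom (\<psi> \<circ> to_K)"
  unfolding chom_def comp_def
proof (intro conjI allI)
  fix x c show "\<psi> (to_K x) * c = c * \<psi> (to_K x)" by (rule chcomm[OF h])
qed (simp_all add: h)

locale bsetup = dsetup P for P :: "'d::idom set" +
  fixes \<phi> :: "'d fract \<Rightarrow> 'b::ring_1" and A :: "'b set"
  assumes std: "standard_assumptions \<phi> A"
begin

lemma std_parts:
  "\<phi> 1 = 1" "\<And>x y. \<phi> (x + y) = \<phi> x + \<phi> y" "\<And>x y. \<phi> (x * y) = \<phi> x * \<phi> y"
  "inj \<phi>" "\<And>x b. \<phi> x * b = b * \<phi> x"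
  "1 \<in> A" "\<And>a b. a \<in> A \<Longrightarrow> b \<in> A \<Longrightarrow> a + b \<in> A"
  "\<And>a b. a \<in> A \<Longrightarrow> b \<in> A \<Longrightarrow> a - b \<in> A"
  "\<And>a b. a \<in> A \<Longrightarrow> b \<in> A \<Longrightarrow> a * b \<in> A"
  "\<And>d. \<phi> (to_K d) \<in> A"
  "A \<inter> range \<phi> = \<phi> ` range to_K"
  using std unfolding standard_assumptions_def by blast+

lemma phi_inj: "\<phi> x = \<phi> y \<longleftrightarrow> x = y" using std_parts(4) by (auto dest: injD)
lemma phi_add[simp]: "\<phi> (x + y) = \<phi> x + \<phi> y" by (rule std_parts(2))
lemma phi_mult[simp]: "\<phi> (x * y) = \<phi> x * \<phi> y" by (rule std_parts(3))
lemma phi_1[simp]: "\<phi> 1 = 1" by (rule std_parts(1))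
lemma phi_comm: "\<phi> x * b = b * \<phi> x" by (rule std_parts(5))
lemma phi_0[simp]: "\<phi> 0 = 0" using phi_add[of 0 0] by simp
lemma chom_phi: "chom \<phi>" unfolding chom_def
proof (intro conjI allI)
  fix x c show "\<phi> x * c = c * \<phi> x" by (rule phi_comm)
qed simp_all
lemma chom_phiK: "chom (\<phi> \<circ> to_K)" using chom_comp[OF chom_phi] .

lemma phi_minus[simp]: "\<phi> (- x) = - \<phi> x" using chminus[OF chom_phi] .
lemma phi_diff[simp]: "\<phi> (x - y) = \<phi> x - \<phi> y" using chdiff[OF chom_phi] .
lemma phi_inv: "x \<noteq> 0 \<Longrightarrow> \<phi> (inverse x) * \<phi> x = 1"
  using phi_mult[of "inverse x" x] by simp

lemma A1: "1 \<in> A" by (rule std_parts(6))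
lemma A_add: "a \<in> A \<Longrightarrow> b \<in> A \<Longrightarrow> a + b \<in> A" by (rule std_parts(7))
lemma A_diff: "a \<in> A \<Longrightarrow> b \<in> A \<Longrightarrow> a - b \<in> A" by (rule std_parts(8))
lemma A_mult: "a \<in> A \<Longrightarrow> b \<in> A \<Longrightarrow> a * b \<in> A" by (rule std_parts(9))
lemma A_phi: "\<phi> (to_K d) \<in> A" by (rule std_parts(10))
lemma A_0: "0 \<in> A" using A_diff[OF A1 A1] by simp
lemma A_uminus: "a \<in> A \<Longrightarrow> - a \<in> A" using A_diff[OF A_0] by fastforce
lemma A_sum: "(\<And>i. i \<in> S \<Longrightarrow> f i \<in> A) \<Longrightarrow> sum f S \<in> A"
  by (induct S rule: infinite_finite_induct) (auto simp: A_0 A_add)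
lemma A_power: "a \<in> A \<Longrightarrow> a ^ n \<in> A"
  by (induct n) (auto simp: A1 A_mult)
lemma A_K: assumes "a \<in> A" "a = \<phi> k" shows "\<exists>d. k = to_K d"
proof -
  have "a \<in> A \<inter> range \<phi>" using assms by auto
  then obtain d where "a = \<phi> (to_K d)" using std_parts(11) by auto
  then show ?thesis using assms phi_inj by auto
qed

lemma peval_A: "a \<in> A \<Longrightarrow> peval (\<phi> \<circ> to_K) g a \<in> A"
  unfolding peval_def by (auto intro!: A_sum A_mult A_phi A_power)

definition AP where "AP = loc_A \<phi> A P"

lemma AP_iff: "z \<in> AP \<longleftrightarrow> (\<exists>s a. s \<notin> P \<and> a \<in> A \<and> z = \<phi> (inverse (to_K s)) * a)"
  unfolding AP_def loc_A_def by blast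

lemma AP_intro: "s \<notin> P \<Longrightarrow> a \<in> A \<Longrightarrow> \<phi> (inverse (to_K s)) * a \<in> AP"
  unfolding AP_iff by blast

lemma A_AP: "a \<in> A \<Longrightarrow> a \<in> AP"
  using AP_intro[OF P_1, of a] by simp

lemma AP_add: assumes "z \<in> AP" "w \<in> AP" shows "z + w \<in> AP"
proof -
  obtain s a t b where sa: "s \<notin> P" "a \<in> A" "z = \<phi> (inverse (to_K s)) * a"
    and tb: "t \<notin> P" "b \<in> A" "w = \<phi> (inverse (to_K t)) * b" using assms AP_iff by metis
  have s0: "to_K s \<noteq> 0" "to_K t \<noteq> 0" using sa tb nP_nz by auto
  have k1: "inverse (to_K (s * t)) * to_K t = inverse (to_K s)" using s0 by (simp add: field_simps)
  have k2: "inverse (to_K (s * t)) * to_K s = inverse (to_K t)" using s0 by (simp add: field_simps)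
  have e1: "\<phi> (inverse (to_K s)) = \<phi> (inverse (to_K (s * t))) * \<phi> (to_K t)"
    by (simp only: k1[symmetric] phi_mult)
  have e2: "\<phi> (inverse (to_K t)) = \<phi> (inverse (to_K (s * t))) * \<phi> (to_K s)"
    by (simp only: k2[symmetric] phi_mult)
  have "z + w = \<phi> (inverse (to_K (s * t))) * (\<phi> (to_K t) * a + \<phi> (to_K s) * b)"
    unfolding sa(3) tb(3) e1 e2 by (simp add: distrib_left mult.assoc)
  moreover have "\<phi> (to_K t) * a + \<phi> (to_K s) * b \<in> A" using sa tb A_add A_mult A_phi by blast
  ultimately show ?thesis using AP_intro nP_mult sa tb by metis
qed

lemma AP_mult: assumes "z \<in> AP" "w \<in> AP" shows "z * w \<in> AP"
proof -
  obtain s a t b where sa: "s \<notin> P" "a \<in> A" "z = \<phi> (inverse (to_K s)) * a"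
    and tb: "t \<notin> P" "b \<in> A" "w = \<phi> (inverse (to_K t)) * b" using assms AP_iff by metis
  have "z * w = (\<phi> (inverse (to_K s)) * \<phi> (inverse (to_K t))) * (a * b)"
    unfolding sa(3) tb(3) by (simp add: mult.assoc phi_comm[of _ b] phi_comm[of _ "a * _"])
  also have "\<phi> (inverse (to_K s)) * \<phi> (inverse (to_K t)) = \<phi> (inverse (to_K (s * t)))"
    by (simp add: phi_mult[symmetric] del: phi_mult)
  finally show ?thesis using AP_intro nP_mult sa tb A_mult by metis
qed

lemma AP_phi: assumes "z \<in> DP" shows "\<phi> z \<in> AP"
proof -
  obtain x s where xs: "s \<notin> P" "z = to_K x / to_K s" using assms DP_iff by blast
  then have "z = inverse (to_K s) * to_K x" by (simp add: divide_inverse mult.commute)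
  then have "\<phi> z = \<phi> (inverse (to_K s)) * \<phi> (to_K x)" by simp
  then show ?thesis using AP_intro[OF xs(1) A_phi] by simp
qed

lemma AP_0: "0 \<in> AP" using A_AP A_0 by blast
lemma AP_1: "1 \<in> AP" using A_AP A1 by blast
lemma AP_uminus: "z \<in> AP \<Longrightarrow> - z \<in> AP"
  using AP_mult[OF AP_phi[OF DP_tK[of "-1"]]] by simp
lemma AP_diff: "z \<in> AP \<Longrightarrow> w \<in> AP \<Longrightarrow> z - w \<in> AP"
  using AP_add[of z "- w"] AP_uminus by simp
lemma AP_sum: "(\<And>i. i \<in> S \<Longrightarrow> f i \<in> AP) \<Longrightarrow> sum f S \<in> AP"
  by (induct S rule: infinite_finite_induct) (auto simp: AP_0 AP_add)
lemma AP_power: "a \<in> AP \<Longrightarrow> a ^ n \<in> AP"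
  by (induct n) (auto simp: AP_1 AP_mult)

lemma AP_K: assumes "\<phi> k \<in> AP" shows "k \<in> DP"
proof -
  obtain s a where sa: "s \<notin> P" "a \<in> A" "\<phi> k = \<phi> (inverse (to_K s)) * a" using assms AP_iff by blast
  have s0: "to_K s \<noteq> 0" using sa nP_nz by simp
  have "\<phi> (to_K s) * \<phi> k = (\<phi> (to_K s) * \<phi> (inverse (to_K s))) * a" using sa(3) by (simp add: mult.assoc)
  also have "\<phi> (to_K s) * \<phi> (inverse (to_K s)) = 1" using s0 by (simp add: phi_mult[symmetric] del: phi_mult)
  finally have "a = \<phi> (to_K s * k)" by simp
  then obtain d where "to_K s * k = to_K d" using A_K sa(2) by blast
  then have "k = to_K d / to_K s" using s0 by (simp add: field_simps)
  then show ?thesis using DP_intro[OF sa(1)] by simp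
qed

end

context bsetup begin

definition pi where "pi = (SOME \<pi>. \<pi> \<in> P \<and> \<pi> \<noteq> 0 \<and> (\<forall>p\<in>P. to_K p / to_K \<pi> \<in> DP))"

lemma pi: "pi \<in> P" "pi \<noteq> 0" "\<And>p. p \<in> P \<Longrightarrow> to_K p / to_K pi \<in> DP"
  using someI_ex[OF K1] unfolding pi_def[symmetric] by blast+

lemma ipi_nD: "inverse (to_K pi) \<notin> DP"
proof
  assume "inverse (to_K pi) \<in> DP"
  then have "inverse (to_K pi) * to_K pi \<in> PP" using PP_mult PP_tK pi(1) by blast
  then show False using pi(2) one_nPP by simp
qed

lemma PP_pi: "z \<in> PP \<longleftrightarrow> (\<exists>w\<in>DP. z = to_K pi * w)"
proof
  assume "z \<in> PP"
  then obtain p s where ps: "p \<in> P" "s \<notin> P" "z = to_K p / to_K s" unfolding PP_def by blast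
  have "z = to_K pi * ((to_K p / to_K pi) * inverse (to_K s))" using ps pi(2) by (simp add: field_simps)
  moreover have "(to_K p / to_K pi) * inverse (to_K s) \<in> DP" using DP_mult pi(3) ps DP_inv_tK by blast
  ultimately show "\<exists>w\<in>DP. z = to_K pi * w" by blast
next
  assume "\<exists>w\<in>DP. z = to_K pi * w"
  then show "z \<in> PP" using PP_mult[OF _ PP_tK[OF pi(1)]] by (auto simp: mult.commute)
qed

lemma phi_lc: "\<phi> x * (b * c) = b * (\<phi> x * c)"
  by (metis mult.assoc phi_comm)

definition PA where "PA = ext_ideal \<phi> A P"

lemma PA_iff: "x \<in> PA \<longleftrightarrow> (\<exists>(n::nat) p a. (\<forall>i<n. p i \<in> P \<and> a i \<in> A) \<and> x = (\<Sum>i<n. \<phi> (to_K (p i)) * a i))"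
  unfolding PA_def ext_ideal_def by blast

lemma PA_0: "0 \<in> PA" unfolding PA_iff by (rule exI[of _ 0]) simp

lemma PA_step: assumes "x \<in> PA" "p0 \<in> P" "a0 \<in> A" shows "x + \<phi> (to_K p0) * a0 \<in> PA"
proof -
  obtain n p a where h: "\<forall>i<(n::nat). p i \<in> P \<and> a i \<in> A" "x = (\<Sum>i<n. \<phi> (to_K (p i)) * a i)"
    using assms(1) unfolding PA_iff by blast
  define p' where "p' = p(n := p0)"
  define a' where "a' = a(n := a0)"
  show ?thesis unfolding PA_iff
  proof (intro exI conjI)
    show "\<forall>i<Suc n. p' i \<in> P \<and> a' i \<in> A" using h assms unfolding p'_def a'_def by (auto simp: less_Suc_eq)
    show "x + \<phi> (to_K p0) * a0 = (\<Sum>i<Suc n. \<phi> (to_K (p' i)) * a' i)"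
      unfolding h(2) sum.lessThan_Suc p'_def a'_def by simp
  qed
qed

lemma PA_add: assumes "x \<in> PA" "y \<in> PA" shows "x + y \<in> PA"
proof -
  obtain n p a where h: "\<forall>i<(n::nat). p i \<in> P \<and> a i \<in> A" "y = (\<Sum>i<n. \<phi> (to_K (p i)) * a i)"
    using assms(2) unfolding PA_iff by blast
  have "\<forall>m\<le>n. x + (\<Sum>i<m. \<phi> (to_K (p i)) * a i) \<in> PA"
  proof (intro allI impI)
    fix m assume "m \<le> n" then show "x + (\<Sum>i<m. \<phi> (to_K (p i)) * a i) \<in> PA"
    proof (induct m)
      case 0 then show ?case using assms(1) by simp
    next
      case (Suc m)
      then have "x + (\<Sum>i<m. \<phi> (to_K (p i)) * a i) + \<phi> (to_K (p m)) * a m \<in> PA"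
        using PA_step h(1) by simp
      then show ?case by (simp add: add.assoc)
    qed
  qed
  then show ?thesis using h(2) by simp
qed

lemma PA_gen: "p \<in> P \<Longrightarrow> a \<in> A \<Longrightarrow> \<phi> (to_K p) * a \<in> PA"
  using PA_step[OF PA_0] by simp

lemma PA_A: "x \<in> PA \<Longrightarrow> x \<in> A"
  unfolding PA_iff by (auto intro!: A_sum A_mult A_phi)

lemma PA_multL: assumes "b \<in> A" "x \<in> PA" shows "b * x \<in> PA"
proof -
  obtain n p a where h: "\<forall>i<(n::nat). p i \<in> P \<and> a i \<in> A" "x = (\<Sum>i<n. \<phi> (to_K (p i)) * a i)"
    using assms(2) unfolding PA_iff by blast
  show ?thesis unfolding PA_iff
  proof (intro exI conjI)
    show "b * x = (\<Sum>i<n. \<phi> (to_K (p i)) * (b * a i))"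
      unfolding h(2) sum_distrib_left
      by (rule sum.cong) (simp_all add: phi_lc[symmetric])
    show "\<forall>i<n. p i \<in> P \<and> b * a i \<in> A" using h assms A_mult by blast
  qed
qed

lemma PA_multR: assumes "b \<in> A" "x \<in> PA" shows "x * b \<in> PA"
proof -
  obtain n p a where h: "\<forall>i<(n::nat). p i \<in> P \<and> a i \<in> A" "x = (\<Sum>i<n. \<phi> (to_K (p i)) * a i)"
    using assms(2) unfolding PA_iff by blast
  show ?thesis unfolding PA_iff
  proof (intro exI conjI)
    show "x * b = (\<Sum>i<n. \<phi> (to_K (p i)) * (a i * b))"
      unfolding h(2) sum_distrib_right by (simp add: mult.assoc)
    show "\<forall>i<n. p i \<in> P \<and> a i * b \<in> A" using h assms A_mult by blast
  qed
qed

lemma PA_uminus: "x \<in> PA \<Longrightarrow> - x \<in> PA"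
  using PA_multL[OF A_uminus[OF A1]] by simp
lemma PA_diff: "x \<in> PA \<Longrightarrow> y \<in> PA \<Longrightarrow> x - y \<in> PA"
  using PA_add[of x "-y"] PA_uminus by simp
lemma PA_sum: "(\<And>i. i \<in> S \<Longrightarrow> f i \<in> PA) \<Longrightarrow> sum f S \<in> PA"
  by (induct S rule: infinite_finite_induct) (auto simp: PA_0 PA_add)

definition PI where "PI = {\<phi> (to_K pi) * z | z. z \<in> AP}"

lemma PI_0: "0 \<in> PI" unfolding PI_def using AP_0 by force
lemma PI_add: "x \<in> PI \<Longrightarrow> y \<in> PI \<Longrightarrow> x + y \<in> PI"
  unfolding PI_def using AP_add by (force simp: distrib_left)
lemma PI_multL: assumes "w \<in> AP" "x \<in> PI" shows "w * x \<in> PI"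
proof -
  obtain z where z: "z \<in> AP" "x = \<phi> (to_K pi) * z" using assms(2) PI_def by blast
  have "w * x = \<phi> (to_K pi) * (w * z)" unfolding z(2) by (rule phi_lc[symmetric])
  then show ?thesis using AP_mult[OF assms(1) z(1)] PI_def by blast
qed
lemma PI_multR: assumes "w \<in> AP" "x \<in> PI" shows "x * w \<in> PI"
proof -
  obtain z where z: "z \<in> AP" "x = \<phi> (to_K pi) * z" using assms(2) PI_def by blast
  have "x * w = \<phi> (to_K pi) * (z * w)" unfolding z(2) by (simp add: mult.assoc)
  then show ?thesis using AP_mult[OF z(1) assms(1)] PI_def by blast
qed
lemma PI_AP: "x \<in> PI \<Longrightarrow> x \<in> AP"
  unfolding PI_def using AP_mult[OF AP_phi[OF DP_tK]] by blast
lemma PI_uminus: "x \<in> PI \<Longrightarrow> - x \<in> PI"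
  using PI_multL[OF AP_uminus[OF AP_1]] by simp
lemma PI_diff: "x \<in> PI \<Longrightarrow> y \<in> PI \<Longrightarrow> x - y \<in> PI"
  using PI_add[of x "-y"] PI_uminus by simp
lemma PI_sum: "(\<And>i. i \<in> S \<Longrightarrow> f i \<in> PI) \<Longrightarrow> sum f S \<in> PI"
  by (induct S rule: infinite_finite_induct) (auto simp: PI_0 PI_add)

lemma PI_PP: assumes "c \<in> PP" "z \<in> AP" shows "\<phi> c * z \<in> PI"
proof -
  obtain w where w: "w \<in> DP" "c = to_K pi * w" using assms(1) PP_pi by blast
  have "\<phi> c * z = \<phi> (to_K pi) * (\<phi> w * z)" using w(2) by (simp add: mult.assoc)
  then show ?thesis using AP_mult[OF AP_phi[OF w(1)] assms(2)] PI_def by blast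
qed

lemma PA_PI: assumes "x \<in> PA" shows "x \<in> PI"
proof -
  obtain n p a where h: "\<forall>i<(n::nat). p i \<in> P \<and> a i \<in> A" "x = (\<Sum>i<n. \<phi> (to_K (p i)) * a i)"
    using assms unfolding PA_iff by blast
  have hh: "\<phi> (to_K (p i)) * a i \<in> PI" if "i \<in> {..<n}" for i
    using PI_PP[OF PP_tK A_AP] h(1) that by blast
  show ?thesis unfolding h(2) by (rule PI_sum[OF hh])
qed

lemma PI_A_PA: assumes "x \<in> PI" "x \<in> A" shows "x \<in> PA"
proof -
  obtain z where z: "z \<in> AP" "x = \<phi> (to_K pi) * z" using assms(1) PI_def by blast
  obtain s a where sa: "s \<notin> P" "a \<in> A" "z = \<phi> (inverse (to_K s)) * a" using z(1) AP_iff by blast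
  have s0: "to_K s \<noteq> 0" using sa nP_nz by simp
  have "\<phi> (to_K s) * x = \<phi> (to_K pi) * (\<phi> (to_K s) * (\<phi> (inverse (to_K s)) * a))"
    unfolding z(2) sa(3) by (rule phi_lc)
  also have "\<phi> (to_K s) * (\<phi> (inverse (to_K s)) * a) = (\<phi> (to_K s) * \<phi> (inverse (to_K s))) * a"
    by (simp only: mult.assoc)
  also have "\<phi> (to_K s) * \<phi> (inverse (to_K s)) = 1" using s0 by (simp add: phi_mult[symmetric] del: phi_mult)
  finally have sx: "\<phi> (to_K s) * x \<in> PA" using PA_gen[OF pi(1) sa(2)] by simp
  obtain t p where tp: "p \<in> P" "1 = p + s * t" using P_inv[OF sa(1)] by blast
  have "x = \<phi> (to_K p) * x + \<phi> (to_K t) * (\<phi> (to_K s) * x)"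
  proof -
    have "x = \<phi> (to_K (p + s * t)) * x" using tp by simp
    also have "\<phi> (to_K (p + s * t)) = \<phi> (to_K p) + \<phi> (to_K t) * \<phi> (to_K s)"
      by (simp add: phi_mult[symmetric] mult.commute del: phi_mult)
    finally show ?thesis by (simp add: distrib_right mult.assoc)
  qed
  moreover have "\<phi> (to_K p) * x \<in> PA" using PA_gen[OF tp(1) assms(2)] .
  moreover have "\<phi> (to_K t) * (\<phi> (to_K s) * x) \<in> PA" using PA_multL[OF A_phi sx] .
  ultimately show ?thesis using PA_add by metis
qed

lemma PI_D: assumes "\<phi> (to_K d) \<in> PI" shows "d \<in> P"
proof -
  obtain z where z: "z \<in> AP" "\<phi> (to_K d) = \<phi> (to_K pi) * z" using assms PI_def by blast
  have "z = \<phi> (inverse (to_K pi) * to_K d)"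
  proof -
    have "\<phi> (inverse (to_K pi) * to_K d) = \<phi> (inverse (to_K pi)) * (\<phi> (to_K pi) * z)" using z(2) by simp
    also have "\<dots> = \<phi> (inverse (to_K pi) * to_K pi) * z" by (simp add: mult.assoc)
    also have "\<dots> = z" using pi(2) by simp
    finally show ?thesis by simp
  qed
  then have "inverse (to_K pi) * to_K d \<in> DP" using AP_K z(1) by simp
  then obtain x s where xs: "s \<notin> P" "inverse (to_K pi) * to_K d = to_K x / to_K s" using DP_iff by blast
  then have "to_K d * to_K s = to_K pi * to_K x" using pi(2) nP_nz[OF xs(1)] by (simp add: field_simps)
  then have "d * s = pi * x" by (metis tK_mult tK_eq_iff)
  then have "d * s \<in> P" using P_multR pi(1) by simp
  then show ?thesis using P_prime xs(1) by blast
qed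

end

context bsetup begin

lemma peval_AP: assumes "\<forall>i. coeff f i \<in> DP" "u \<in> AP" shows "peval \<phi> f u \<in> AP"
  unfolding peval_def using assms by (auto intro!: AP_sum AP_mult AP_phi AP_power)

lemma DPX_Int: "{f. \<forall>i. coeff f i \<in> loc_D P} \<subseteq> Int_K \<phi> (loc_A \<phi> A P)"
  unfolding Int_K_def DP_def[symmetric] AP_def[symmetric] using peval_AP by blast

lemma pow_diff_PI: assumes "u \<in> AP" "v \<in> AP" "u - v \<in> PI" shows "u ^ n - v ^ n \<in> PI"
proof (induct n)
  case 0 then show ?case using PI_0 by simp
next
  case (Suc n)
  have "u ^ Suc n - v ^ Suc n = u * (u ^ n - v ^ n) + (u - v) * v ^ n"
    by (simp add: algebra_simps)
  moreover have "u * (u ^ n - v ^ n) \<in> PI" using PI_multL[OF assms(1) Suc] .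
  moreover have "(u - v) * v ^ n \<in> PI" using PI_multR[OF AP_power[OF assms(2)] assms(3)] .
  ultimately show ?case using PI_add by metis
qed

lemma peval_diff_PI: assumes "u \<in> AP" "v \<in> AP" "u - v \<in> PI"
  shows "peval (\<phi> \<circ> to_K) g u - peval (\<phi> \<circ> to_K) g v \<in> PI"
proof -
  have "peval (\<phi> \<circ> to_K) g u - peval (\<phi> \<circ> to_K) g v =
      (\<Sum>i\<le>degree g. \<phi> (to_K (coeff g i)) * (u ^ i - v ^ i))"
    unfolding peval_def by (simp add: sum_subtractf right_diff_distrib)
  also have "\<dots> \<in> PI"
    by (rule PI_sum, rule PI_multL[OF AP_phi[OF DP_tK] pow_diff_PI[OF assms]])
  finally show ?thesis .
qed

lemma N1_V: assumes H: "\<forall>a\<in>A. peval (\<phi> \<circ> to_K) g a \<in> PA" and u: "u \<in> AP"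
  shows "peval (\<phi> \<circ> to_K) g u \<in> PI"
proof -
  obtain s a where sa: "s \<notin> P" "a \<in> A" "u = \<phi> (inverse (to_K s)) * a" using u AP_iff by blast
  obtain t p where tp: "p \<in> P" "1 = p + s * t" using P_inv[OF sa(1)] by blast
  have s0: "to_K s \<noteq> 0" using sa nP_nz by simp
  define v where "v = \<phi> (to_K t) * a"
  have vA: "v \<in> A" unfolding v_def using A_mult A_phi sa(2) by blast
  have k: "inverse (to_K s) - to_K t = inverse (to_K s) * to_K p"
  proof -
    have "to_K 1 = to_K (p + s * t)" using tp by simp
    then have "1 = to_K p + to_K s * to_K t" by simp
    then show ?thesis using s0 by (simp add: field_simps)
  qed
  have "u - v = \<phi> (inverse (to_K s) - to_K t) * a" unfolding sa(3) v_def by (simp add: left_diff_distrib)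
  also have "\<dots> = \<phi> (inverse (to_K s) * to_K p) * a" unfolding k ..
  finally have "u - v \<in> PI" using PI_PP[OF PP_mult[OF DP_inv_tK[OF sa(1)] PP_tK[OF tp(1)]] A_AP[OF sa(2)]]
    by simp
  then have "peval (\<phi> \<circ> to_K) g u - peval (\<phi> \<circ> to_K) g v \<in> PI"
    using peval_diff_PI u A_AP[OF vA] by blast
  moreover have "peval (\<phi> \<circ> to_K) g v \<in> PI" using H vA PA_PI by blast
  ultimately show ?thesis using PI_add by fastforce
qed

lemma ipi_unit: "\<phi> (inverse (to_K pi)) * (\<phi> (to_K pi) * z) = z"
proof -
  have "\<phi> (inverse (to_K pi)) * (\<phi> (to_K pi) * z) = \<phi> (inverse (to_K pi) * to_K pi) * z"
    by (simp add: mult.assoc)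
  then show ?thesis using pi(2) by simp
qed

lemma N1_C2:
  assumes g0: "coeff g i0 \<notin> P" and H: "\<forall>a\<in>A. peval (\<phi> \<circ> to_K) g a \<in> PA"
  shows "{f. \<forall>i. coeff f i \<in> loc_D P} \<subset> Int_K \<phi> (loc_A \<phi> A P)"
proof -
  define f where "f = Polynomial.smult (inverse (to_K pi)) (map_poly to_K g)"
  have cf: "coeff f i = inverse (to_K pi) * to_K (coeff g i)" for i
    unfolding f_def by (simp add: coeff_map_poly)
  have df: "degree f \<le> degree g" by (rule degree_le) (auto simp: cf coeff_eq_0)
  have fI: "f \<in> Int_K \<phi> AP" unfolding Int_K_def
  proof (intro CollectI ballI)
    fix u assume u: "u \<in> AP"
    obtain z where z: "z \<in> AP" "peval (\<phi> \<circ> to_K) g u = \<phi> (to_K pi) * z"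
      using N1_V[OF H u] PI_def by blast
    have "peval \<phi> f u = (\<Sum>i\<le>degree g. \<phi> (coeff f i) * u ^ i)"
      using peval_le[OF chom_phi df] .
    also have "\<dots> = \<phi> (inverse (to_K pi)) * peval (\<phi> \<circ> to_K) g u"
      unfolding peval_def cf by (simp add: sum_distrib_left mult.assoc)
    also have "\<dots> = z" unfolding z(2) by (rule ipi_unit)
    finally show "peval \<phi> f u \<in> AP" using z(1) by simp
  qed
  have fN: "f \<notin> {f. \<forall>i. coeff f i \<in> loc_D P}"
  proof
    assume "f \<in> {f. \<forall>i. coeff f i \<in> loc_D P}"
    then have "coeff f i0 \<in> DP" unfolding DP_def by blast
    then have "coeff f i0 * inverse (to_K (coeff g i0)) \<in> DP" using DP_mult DP_inv_tK[OF g0] by blast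
    moreover have "coeff f i0 * inverse (to_K (coeff g i0)) = inverse (to_K pi)"
      using g0 P0 unfolding cf by (auto simp: field_simps)
    ultimately show False using ipi_nD by simp
  qed
  show ?thesis
  proof (rule psubsetI[OF DPX_Int])
    have "f \<in> Int_K \<phi> (loc_A \<phi> A P)" using fI unfolding AP_def .
    then show "{f. \<forall>i. coeff f i \<in> loc_D P} \<noteq> Int_K \<phi> (loc_A \<phi> A P)" using fN by blast
  qed
qed

end

lemma fract_repr: "\<exists>a b. b \<noteq> 0 \<and> (z :: 'd::idom fract) = to_K a / to_K b"
proof (cases z rule: Fraction_Field.Fract_cases)
  case (Fract a b)
  then show ?thesis using Fract_tK by blast
qed

context bsetup begin

lemma C2_N1:
  assumes C2: "{f. \<forall>i. coeff f i \<in> loc_D P} \<subset> Int_K \<phi> (loc_A \<phi> A P)"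
  shows "null_ideal_mod_nonzero \<phi> A P"
proof -
  obtain f where fI: "f \<in> Int_K \<phi> (loc_A \<phi> A P)" and fN: "f \<notin> {f. \<forall>i. coeff f i \<in> loc_D P}"
    using C2 by blast
  have fAP: "peval \<phi> f u \<in> AP" if "u \<in> AP" for u using fI that unfolding Int_K_def AP_def by blast
  obtain i0 where i0: "coeff f i0 \<notin> DP" using fN DP_def by blast
  define J where "J = {c. c \<in> DP \<and> (\<forall>i. c * coeff f i \<in> DP)}"
  have JPP: "c \<in> PP" if "c \<in> J" for c
  proof (rule ccontr)
    assume "c \<notin> PP"
    moreover have cD: "c \<in> DP" using that J_def by blast
    ultimately have "inverse c \<in> DP" "c \<noteq> 0" using DP_unit by auto
    moreover have "c * coeff f i0 \<in> DP" using that J_def by blast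
    ultimately have "inverse c * (c * coeff f i0) \<in> DP" using DP_mult by blast
    then show False using i0 \<open>c \<noteq> 0\<close> by (simp add: mult.assoc[symmetric])
  qed
  have "\<forall>i. \<exists>ab. snd ab \<noteq> 0 \<and> coeff f i = to_K (fst ab) / to_K (snd ab)"
  proof
    fix i
    obtain a b where "b \<noteq> 0" "coeff f i = to_K a / to_K b" using fract_repr by blast
    then show "\<exists>ab. snd ab \<noteq> 0 \<and> coeff f i = to_K (fst ab) / to_K (snd ab)"
      by (intro exI[of _ "(a, b)"]) simp
  qed
  then obtain ab where ab: "\<And>i. snd (ab i) \<noteq> 0 \<and> coeff f i = to_K (fst (ab i)) / to_K (snd (ab i))"
    by metis
  define na where "na i = fst (ab i)" for i
  define de where "de i = snd (ab i)" for i
  have nade: "de i \<noteq> 0" "coeff f i = to_K (na i) / to_K (de i)" for i using ab na_def de_def by auto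
  define c0 where "c0 = to_K (\<Prod>i\<le>degree f. de i)"
  have c00: "c0 \<noteq> 0" unfolding c0_def using nade(1) by simp
  have c0J: "c0 \<in> J" unfolding J_def
  proof (intro CollectI conjI allI)
    show "c0 \<in> DP" unfolding c0_def by simp
    fix i show "c0 * coeff f i \<in> DP"
    proof (cases "i \<le> degree f")
      case True
      then have "c0 = to_K (de i) * to_K (\<Prod>j\<in>{..degree f} - {i}. de j)"
        unfolding c0_def by (simp add: prod.remove)
      then have "c0 * coeff f i = to_K (na i * (\<Prod>j\<in>{..degree f} - {i}. de j))"
        using nade[of i] by (simp add: field_simps)
      then show ?thesis by (simp only: DP_tK)
    next
      case False then show ?thesis by (simp add: coeff_eq_0)
    qed
  qed
  have "\<exists>c\<in>J. \<exists>i. c * coeff f i \<notin> PP"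
  proof (rule ccontr)
    assume "\<not> ?thesis"
    then have allPP: "\<And>c i. c \<in> J \<Longrightarrow> c * coeff f i \<in> PP" by blast
    have "inverse (to_K pi) \<in> DP"
    proof (rule IL[of J c0])
      show "J \<subseteq> DP" using J_def by blast
      show "a + b \<in> J" if "a \<in> J" "b \<in> J" for a b
        using that unfolding J_def by (auto intro: DP_add simp: distrib_right)
      show "z * a \<in> J" if "z \<in> DP" "a \<in> J" for z a
        using that unfolding J_def by (auto intro: DP_mult simp: mult.assoc)
      show "c0 \<in> J" by (rule c0J)
      show "c0 \<noteq> 0" by (rule c00)
      show "inverse (to_K pi) * a \<in> J" if "a \<in> J" for a
      proof -
        have ipi: "inverse (to_K pi) * w \<in> DP" if "w \<in> PP" for w
        proof -
          have "\<exists>w'\<in>DP. w = to_K pi * w'" using that unfolding PP_pi .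
          then obtain w' where "w' \<in> DP" "w = to_K pi * w'" by blast
          then show ?thesis using pi(2) by (simp add: mult.assoc[symmetric])
        qed
        show ?thesis unfolding J_def
          using ipi[OF JPP[OF that]] ipi[OF allPP[OF that]] by (simp add: mult.assoc)
      qed
    qed
    then show False using ipi_nD by blast
  qed
  then obtain c i1 where cJ: "c \<in> J" and i1: "c * coeff f i1 \<notin> PP" by blast
  have cPP: "c \<in> PP" using JPP[OF cJ] .
  define h where "h = Polynomial.smult c f"
  have ch: "coeff h i = c * coeff f i" for i unfolding h_def by simp
  have hD: "coeff h i \<in> DP" for i using cJ ch J_def by simp
  have "\<forall>i. \<exists>xs. snd xs \<notin> P \<and> coeff h i = to_K (fst xs) / to_K (snd xs)"
  proof
    fix i
    obtain a b where "b \<notin> P" "coeff h i = to_K a / to_K b" using hD[of i] DP_iff by blast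
    then show "\<exists>xs. snd xs \<notin> P \<and> coeff h i = to_K (fst xs) / to_K (snd xs)"
      by (intro exI[of _ "(a, b)"]) simp
  qed
  then obtain xs where xs: "\<And>i. snd (xs i) \<notin> P \<and> coeff h i = to_K (fst (xs i)) / to_K (snd (xs i))"
    by metis
  define x where "x i = fst (xs i)" for i
  define s where "s i = snd (xs i)" for i
  have xsi: "s i \<notin> P" "coeff h i = to_K (x i) / to_K (s i)" for i using xs x_def s_def by auto
  define S where "S = (\<Prod>i\<le>degree f. s i)"
  have SP: "S \<notin> P" unfolding S_def by (rule nP_prod) (auto simp: xsi)
  have exd: "\<exists>d. to_K d = to_K S * coeff h i" for i
  proof (cases "i \<le> degree f")
    case True
    then have "S = s i * (\<Prod>j\<in>{..degree f} - {i}. s j)"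
      unfolding S_def by (simp add: prod.remove)
    then have "to_K S * coeff h i = to_K (x i * (\<Prod>j\<in>{..degree f} - {i}. s j))"
      using xsi[of i] nP_nz[OF xsi(1)[of i]] by (simp add: field_simps)
    then show ?thesis by metis
  next
    case False then show ?thesis by (intro exI[of _ 0]) (simp add: ch coeff_eq_0)
  qed
  define sel :: "'d fract \<Rightarrow> 'd" where "sel w = (SOME d. to_K d = w)" for w
  have sel0: "sel 0 = 0"
  proof -
    have "to_K (sel 0) = 0" unfolding sel_def by (rule someI[of _ 0]) simp
    then show ?thesis by simp
  qed
  define g where "g = map_poly sel (Polynomial.smult (to_K S) h)"
  have cg: "to_K (coeff g i) = to_K S * coeff h i" for i
  proof -
    have "coeff g i = sel (to_K S * coeff h i)" unfolding g_def by (simp add: coeff_map_poly sel0)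
    then show ?thesis unfolding sel_def using someI_ex[OF exd[of i]] by simp
  qed
  have gi1: "coeff g i1 \<notin> P"
  proof
    assume "coeff g i1 \<in> P"
    then have "inverse (to_K S) * to_K (coeff g i1) \<in> PP" using PP_mult[OF DP_inv_tK[OF SP] PP_tK] by blast
    moreover have "inverse (to_K S) * to_K (coeff g i1) = coeff h i1"
      using cg[of i1] nP_nz[OF SP] by (simp add: mult.assoc[symmetric])
    ultimately have "coeff h i1 \<in> PP" by simp
    then show False using i1 ch by simp
  qed
  have dg: "degree g \<le> degree f"
  proof (rule degree_le, intro allI impI)
    fix i assume "degree f < i"
    then have "to_K (coeff g i) = 0" using cg ch by (simp add: coeff_eq_0)
    then show "coeff g i = 0" by simp
  qed
  have "peval (\<phi> \<circ> to_K) g a \<in> PA" if a: "a \<in> A" for a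
  proof -
    have "peval (\<phi> \<circ> to_K) g a = (\<Sum>i\<le>degree f. (\<phi> \<circ> to_K) (coeff g i) * a ^ i)"
      using peval_le[OF chom_phiK dg] .
    also have "\<dots> = \<phi> (to_K S) * (\<phi> c * (\<Sum>i\<le>degree f. \<phi> (coeff f i) * a ^ i))"
      by (simp add: cg ch sum_distrib_left mult.assoc)
    also have "(\<Sum>i\<le>degree f. \<phi> (coeff f i) * a ^ i) = peval \<phi> f a" unfolding peval_def ..
    finally have eq: "peval (\<phi> \<circ> to_K) g a = \<phi> (to_K S) * (\<phi> c * peval \<phi> f a)" .
    have "\<phi> c * peval \<phi> f a \<in> PI" using PI_PP[OF cPP fAP[OF A_AP[OF a]]] .
    then have "peval (\<phi> \<circ> to_K) g a \<in> PI" unfolding eq using PI_multL[OF AP_phi[OF DP_tK]] by blast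
    then show ?thesis using PI_A_PA peval_A[OF a] by blast
  qed
  then show ?thesis unfolding null_ideal_mod_nonzero_def PA_def[symmetric] using gi1 by blast
qed

end

context dsetup begin

lemma roots_P:
  assumes "finite T"
  shows "(\<forall>t\<in>T. poly g t \<in> P) \<Longrightarrow> (\<forall>t\<in>T. \<forall>t'\<in>T. t \<noteq> t' \<longrightarrow> t - t' \<notin> P) \<Longrightarrow>
    degree g < card T \<Longrightarrow> coeff g i \<in> P"
  using assms
proof (induct T arbitrary: g i rule: finite_induct)
  case empty then show ?case by simp
next
  case (insert t T)
  have gt: "poly g t \<in> P" using insert by simp
  show ?case
  proof (cases "degree g = 0")
    case True
    then have "poly g t = coeff g 0" by (simp add: poly_altdef)
    then show ?thesis using gt True by (cases i) (auto simp: coeff_eq_0 P0)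
  next
    case False
    define q where "q = synthetic_div g t"
    have gq: "g = Polynomial.smult (- t) q + pCons 0 q + [:poly g t:]"
      using synthetic_div_correct'[of t g] unfolding q_def by simp
    have dq: "degree q < card T"
      using insert False degree_synthetic_div[of g t] unfolding q_def by simp
    have qT: "\<forall>t'\<in>T. poly q t' \<in> P"
    proof
      fix t' assume t': "t' \<in> T"
      have "poly g t' = (t' - t) * poly q t' + poly g t"
        using arg_cong[OF gq, of "\<lambda>p. poly p t'"] by (simp add: algebra_simps)
      then have e: "(t' - t) * poly q t' = poly g t' - poly g t" by simp
      have "poly g t' \<in> P" using insert(4) t' by simp
      then have "(t' - t) * poly q t' \<in> P" unfolding e using gt P_diff by blast
      moreover have "t' - t \<notin> P" using insert(2,5) t' by (metis insertCI)
      ultimately show "poly q t' \<in> P" using P_prime by blast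
    qed
    have cq: "coeff q j \<in> P" for j
      using insert(3)[OF qT _ dq] insert(5) by blast
    have "coeff g i = - t * coeff q i + coeff (pCons 0 q) i + coeff [:poly g t:] i"
      by (subst gq) simp
    moreover have "coeff (pCons 0 q) i \<in> P" by (cases i) (auto simp: cq P0)
    moreover have "coeff [:poly g t:] i \<in> P" by (cases i) (auto simp: gt P0)
    moreover have "- t * coeff q i \<in> P" using cq P_multL by blast
    ultimately show ?thesis using P_add by (metis (no_types))
  qed
qed

definition cls :: "'d \<Rightarrow> 'd set" where "cls x = {y. x - y \<in> P}"
definition rep :: "'d set \<Rightarrow> 'd" where "rep X = (SOME x. X = cls x)"

lemma quot_cls: "quot_ring P = range cls" unfolding quot_ring_def cls_def by simp

lemma rep_cls: assumes "X \<in> quot_ring P" shows "X = cls (rep X)"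
proof -
  obtain x where "X = cls x" using assms quot_cls by blast
  then show ?thesis unfolding rep_def using someI[of "\<lambda>y. X = cls y" x] by blast
qed

lemma cls_eq: "t - t' \<in> P \<Longrightarrow> cls t = cls t'"
proof -
  assume h: "t - t' \<in> P"
  have "t - y \<in> P \<longleftrightarrow> t' - y \<in> P" for y
  proof
    assume "t - y \<in> P" then have "(t - y) - (t - t') \<in> P" using P_diff h by blast
    then show "t' - y \<in> P" by (simp add: algebra_simps)
  next
    assume "t' - y \<in> P" then have "(t' - y) + (t - t') \<in> P" using P_add h by blast
    then show "t - y \<in> P" by (simp add: algebra_simps)
  qed
  then show ?thesis unfolding cls_def by blast
qed

lemma many_reps:
  assumes "infinite (quot_ring P)"
  shows "\<exists>T. finite T \<and> card T = n \<and> (\<forall>t\<in>T. \<forall>t'\<in>T. t \<noteq> t' \<longrightarrow> t - t' \<notin> P)"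
proof -
  obtain B where B: "finite B" "card B = n" "B \<subseteq> quot_ring P"
    using infinite_arbitrarily_large[OF assms] by blast
  have inj: "inj_on rep B"
  proof
    fix X Y assume "X \<in> B" "Y \<in> B" "rep X = rep Y"
    then show "X = Y" using rep_cls B(3) by (metis subsetD)
  qed
  have "\<forall>t\<in>rep ` B. \<forall>t'\<in>rep ` B. t \<noteq> t' \<longrightarrow> t - t' \<notin> P"
  proof (intro ballI impI)
    fix t t' assume "t \<in> rep ` B" "t' \<in> rep ` B" "t \<noteq> t'"
    then obtain X Y where XY: "X \<in> B" "Y \<in> B" "t = rep X" "t' = rep Y" by blast
    show "t - t' \<notin> P"
    proof
      assume "t - t' \<in> P"
      then have "cls t = cls t'" by (rule cls_eq)
      then have "X = Y" using XY rep_cls B(3) by (metis subsetD)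
      then show False using XY \<open>t \<noteq> t'\<close> by simp
    qed
  qed
  moreover have "card (rep ` B) = n" using card_image[OF inj] B by simp
  ultimately show ?thesis using B(1) by blast
qed

lemma reps_finite:
  assumes "finite (quot_ring P)"
  shows "\<exists>R. finite R \<and> R \<noteq> {} \<and> (\<forall>d. \<exists>r\<in>R. d - r \<in> P)"
proof -
  define R where "R = rep ` quot_ring P"
  have "\<exists>r\<in>R. d - r \<in> P" for d
  proof -
    have X: "cls d \<in> quot_ring P" using quot_cls by simp
    then have "cls d = cls (rep (cls d))" by (rule rep_cls)
    moreover have "rep (cls d) \<in> cls (rep (cls d))" unfolding cls_def using P0 by simp
    ultimately have "d - rep (cls d) \<in> P" unfolding cls_def by simp
    then show ?thesis using X R_def by blast
  qed
  moreover have "R \<noteq> {}" using R_def quot_cls by simp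
  ultimately show ?thesis using assms R_def by blast
qed

end

context bsetup begin

lemma peval_const_D: "peval (\<phi> \<circ> to_K) g (\<phi> (to_K d)) = \<phi> (to_K (poly g d))"
  unfolding peval_def poly_altdef by (simp add: tK_sum chsum[OF chom_phi] chpow[OF chom_phi])

lemma N1_C3:
  assumes N1: "null_ideal_mod_nonzero \<phi> A P"
  shows "finite (quot_ring P) \<and> bounded_degree_mod \<phi> A P"
proof -
  obtain g i0 where g0: "coeff g i0 \<notin> P" and H: "\<forall>a\<in>A. peval (\<phi> \<circ> to_K) g a \<in> PA"
    using N1 unfolding null_ideal_mod_nonzero_def PA_def by blast
  have bd: "bounded_degree_mod \<phi> A P" unfolding bounded_degree_mod_def PA_def[symmetric]
  proof (intro exI[of _ "degree g"] ballI)
    fix a assume "a \<in> A"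
    then show "\<exists>g'. (\<exists>i. coeff g' i \<notin> P) \<and> (\<forall>i>degree g. coeff g' i \<in> P) \<and> peval (\<phi> \<circ> to_K) g' a \<in> PA"
      using g0 H by (intro exI[of _ g]) (auto simp: coeff_eq_0 P0)
  qed
  have roots: "poly g d \<in> P" for d
  proof -
    have "\<phi> (to_K (poly g d)) \<in> PA" using H A_phi peval_const_D by metis
    then show ?thesis using PA_PI PI_D by blast
  qed
  have "finite (quot_ring P)"
  proof (rule ccontr)
    assume "infinite (quot_ring P)"
    then obtain T where T: "finite T" "card T = Suc (degree g)" "\<forall>t\<in>T. \<forall>t'\<in>T. t \<noteq> t' \<longrightarrow> t - t' \<notin> P"
      using many_reps by blast
    have "coeff g i0 \<in> P" using roots_P[OF T(1)] roots T by simp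
    then show False using g0 by simp
  qed
  then show ?thesis using bd by simp
qed

end

context bsetup begin

lemma pig:
  assumes R: "finite R" "R \<noteq> {}" "\<And>d. \<exists>r\<in>R. d - r \<in> P"
    and a: "a \<in> A"
    and g: "coeff g i0 \<notin> P" "\<And>i. i > n \<Longrightarrow> coeff g i \<in> P" "peval (\<phi> \<circ> to_K) g a \<in> PA"
  shows "\<exists>i j. i < j \<and> j \<le> card R ^ n \<and> a ^ j - a ^ i \<in> PA"
proof -
  define Z where "Z = {i. coeff g i \<notin> P}"
  have Zfin: "finite Z" using g(2) unfolding Z_def
    by (metis (mono_tags, lifting) finite_atMost finite_subset leI mem_Collect_eq subsetI atMost_iff)
  have Zne: "Z \<noteq> {}" using g(1) Z_def by blast
  define m where "m = Max Z"
  have mZ: "coeff g m \<notin> P" using Max_in[OF Zfin Zne] unfolding m_def Z_def by simp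
  have mn: "m \<le> n" using mZ g(2) leI by blast
  have above: "coeff g i \<in> P" if "i > m" for i
  proof (rule ccontr)
    assume "coeff g i \<notin> P"
    then have "i \<le> m" unfolding m_def using Max_ge[OF Zfin] Z_def by blast
    then show False using that by simp
  qed
  have mdeg: "m \<le> degree g" using mZ P0 by (metis le_degree)
  obtain t p where tp: "p \<in> P" "1 = p + coeff g m * t" using P_inv[OF mZ] by blast
  define M where "M = {x. \<exists>d w. w \<in> PA \<and> x = (\<Sum>i<m. \<phi> (to_K (d i)) * a ^ i) + w}"
  have M_PA: "w \<in> M" if "w \<in> PA" for w
    unfolding M_def using that by (intro CollectI exI[of _ "\<lambda>i. 0"] exI[of _ w]) simp
  have M_add: "x + y \<in> M" if hxy: "x \<in> M" "y \<in> M" for x y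
  proof -
    obtain d1 w1 where 1: "w1 \<in> PA" "x = (\<Sum>i<m. \<phi> (to_K (d1 i)) * a ^ i) + w1" using hxy(1) unfolding M_def by blast
    obtain d2 w2 where 2: "w2 \<in> PA" "y = (\<Sum>i<m. \<phi> (to_K (d2 i)) * a ^ i) + w2" using hxy(2) unfolding M_def by blast
    have e: "x + y = (\<Sum>i<m. \<phi> (to_K (d1 i + d2 i)) * a ^ i) + (w1 + w2)"
      unfolding 1 2 by (simp add: sum.distrib distrib_right algebra_simps)
    show ?thesis unfolding M_def
      by (intro CollectI exI[of _ "\<lambda>i. d1 i + d2 i"] exI[of _ "w1 + w2"] conjI PA_add[OF 1(1) 2(1)] e)
  qed
  have M_scal: "\<phi> (to_K e) * x \<in> M" if hx: "x \<in> M" for x e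
  proof -
    obtain d w where 1: "w \<in> PA" "x = (\<Sum>i<m. \<phi> (to_K (d i)) * a ^ i) + w" using hx unfolding M_def by blast
    have e: "\<phi> (to_K e) * x = (\<Sum>i<m. \<phi> (to_K (e * d i)) * a ^ i) + \<phi> (to_K e) * w"
      unfolding 1 by (simp add: distrib_left sum_distrib_left mult.assoc)
    show ?thesis unfolding M_def
      by (intro CollectI exI[of _ "\<lambda>i. e * d i"] exI[of _ "\<phi> (to_K e) * w"] conjI PA_multL[OF A_phi 1(1)] e)
  qed
  have M_0: "0 \<in> M" using M_PA PA_0 by blast
  have M_sum: "sum f S \<in> M" if "\<And>i. i \<in> S \<Longrightarrow> f i \<in> M" for f and S :: "nat set"
    using that by (induct S rule: infinite_finite_induct) (auto simp: M_0 M_add)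
  have M_lt: "a ^ i \<in> M" if "i < m" for i
  proof -
    have "(\<Sum>j<m. \<phi> (to_K (if j = i then 1 else 0)) * a ^ j) = (\<Sum>j<m. if j = i then a ^ j else 0)"
      by (rule sum.cong) auto
    also have "\<dots> = a ^ i" using that by (simp add: sum.delta)
    finally have e: "a ^ i = (\<Sum>j<m. \<phi> (to_K (if j = i then 1 else 0)) * a ^ j) + 0" by simp
    show ?thesis unfolding M_def
      by (intro CollectI exI[of _ "\<lambda>j. if j = i then 1 else 0"] exI[of _ 0] conjI PA_0 e)
  qed
  have M_m: "a ^ m \<in> M"
  proof -
    define f where "f i = \<phi> (to_K (coeff g i)) * a ^ i" for i
    define G where "G = peval (\<phi> \<circ> to_K) g a"
    have G: "G = (\<Sum>i\<le>degree g. f i)" unfolding G_def peval_def f_def by simp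
    have "(\<Sum>i\<le>degree g. f i) = (\<Sum>i\<le>degree g. if i \<le> m then f i else 0) + (\<Sum>i\<le>degree g. if i \<le> m then 0 else f i)"
      by (simp add: sum.distrib[symmetric] if_distrib cong: if_cong)
    also have "(\<Sum>i\<le>degree g. if i \<le> m then f i else 0) = (\<Sum>i\<le>m. if i \<le> m then f i else 0)"
      by (rule sum.mono_neutral_right) (use mdeg in auto)
    also have "\<dots> = (\<Sum>i\<le>m. f i)" by (rule sum.cong) auto
    also have "\<dots> = (\<Sum>i<m. f i) + f m" by (simp add: lessThan_Suc_atMost[symmetric])
    finally have Gs: "G = (\<Sum>i<m. f i) + f m + W"
      if "W = (\<Sum>i\<le>degree g. if i \<le> m then 0 else f i)" for W using G that by simp
    define W where "W = (\<Sum>i\<le>degree g. if i \<le> m then 0 else f i)"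
    have WPA: "W \<in> PA" unfolding W_def
      by (rule PA_sum) (auto simp: f_def PA_0 intro!: PA_gen above A_power a)
    have GPA: "G \<in> PA" using g(3) G_def by simp
    have "\<phi> (to_K t) * G = (\<Sum>i<m. \<phi> (to_K (t * coeff g i)) * a ^ i) + \<phi> (to_K (t * coeff g m)) * a ^ m + \<phi> (to_K t) * W"
      unfolding Gs[OF W_def] f_def by (simp add: distrib_left sum_distrib_left mult.assoc)
    also have "\<phi> (to_K (t * coeff g m)) * a ^ m = a ^ m - \<phi> (to_K p) * a ^ m"
    proof -
      have "t * coeff g m = 1 - p" using tp by (simp add: algebra_simps)
      then show ?thesis by (simp add: left_diff_distrib)
    qed
    finally have e: "a ^ m = (\<Sum>i<m. \<phi> (to_K (- (t * coeff g i))) * a ^ i) +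
        (\<phi> (to_K t) * G - \<phi> (to_K t) * W + \<phi> (to_K p) * a ^ m)"
      by (simp add: sum_negf algebra_simps)
    have w: "\<phi> (to_K t) * G - \<phi> (to_K t) * W + \<phi> (to_K p) * a ^ m \<in> PA"
      using PA_add PA_diff PA_multL[OF A_phi GPA] PA_multL[OF A_phi WPA] PA_gen[OF tp(1) A_power[OF a]]
      by metis
    show ?thesis unfolding M_def
      by (intro CollectI exI[of _ "\<lambda>i. - (t * coeff g i)"] exI[of _ "\<phi> (to_K t) * G - \<phi> (to_K t) * W + \<phi> (to_K p) * a ^ m"] conjI w e)
  qed
  have M_a: "a * x \<in> M" if hx: "x \<in> M" for x
  proof -
    obtain d w where 1: "w \<in> PA" "x = (\<Sum>i<m. \<phi> (to_K (d i)) * a ^ i) + w" using hx unfolding M_def by blast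
    have "a * x = (\<Sum>i<m. \<phi> (to_K (d i)) * a ^ Suc i) + a * w"
      unfolding 1 distrib_left sum_distrib_left by (simp add: phi_lc)
    moreover have "(\<Sum>i<m. \<phi> (to_K (d i)) * a ^ Suc i) \<in> M"
    proof (rule M_sum)
      fix i assume "i \<in> {..<m}"
      then have "a ^ Suc i \<in> M" using M_lt[of "Suc i"] M_m by (cases "Suc i = m") (auto simp del: power_Suc)
      then show "\<phi> (to_K (d i)) * a ^ Suc i \<in> M" by (rule M_scal)
    qed
    moreover have "a * w \<in> M" using M_PA PA_multL[OF a 1(1)] by blast
    ultimately show ?thesis using M_add by simp
  qed
  have M_all: "a ^ k \<in> M" for k
  proof (induct k)
    case 0 then show ?case using M_lt[of 0] M_m by (cases "m = 0") (auto simp del: power_0)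
  next
    case (Suc k) then show ?case using M_a by simp
  qed
  define V where "V = (\<lambda>r. \<Sum>i<m. \<phi> (to_K (r i)) * a ^ i) ` ({..<m} \<rightarrow>\<^sub>E R)"
  have Vfin: "finite V" unfolding V_def using R(1) by (simp add: finite_PiE)
  have cardV: "card V \<le> card R ^ n"
  proof -
    have "card V \<le> card ({..<m} \<rightarrow>\<^sub>E R)" unfolding V_def using R(1) by (simp add: card_image_le finite_PiE)
    also have "\<dots> = card R ^ m" by (simp add: card_PiE)
    also have "\<dots> \<le> card R ^ n"
    proof (rule power_increasing[OF mn])
      show "1 \<le> card R" using R(1,2) by (simp add: Suc_le_eq card_gt_0_iff)
    qed
    finally show ?thesis .
  qed
  have inV: "\<exists>v\<in>V. a ^ k - v \<in> PA" for k
  proof -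
    obtain d w where 1: "w \<in> PA" "a ^ k = (\<Sum>i<m. \<phi> (to_K (d i)) * a ^ i) + w" using M_all M_def by blast
    define r where "r i = (if i < m then (SOME r. r \<in> R \<and> d i - r \<in> P) else undefined)" for i
    have r: "r i \<in> R \<and> d i - r i \<in> P" if "i < m" for i
      using that someI_ex[of "\<lambda>r. r \<in> R \<and> d i - r \<in> P"] R(3) unfolding r_def by auto
    have rE: "r \<in> {..<m} \<rightarrow>\<^sub>E R"
    proof (rule PiE_I)
      show "r i \<in> R" if "i \<in> {..<m}" for i using r that by auto
      show "r i = undefined" if "i \<notin> {..<m}" for i using that unfolding r_def by simp
    qed
    define v where "v = (\<Sum>i<m. \<phi> (to_K (r i)) * a ^ i)"
    have "a ^ k - v = (\<Sum>i<m. \<phi> (to_K (d i - r i)) * a ^ i) + w"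
      unfolding 1 v_def by (simp add: left_diff_distrib sum_subtractf algebra_simps)
    moreover have "(\<Sum>i<m. \<phi> (to_K (d i - r i)) * a ^ i) \<in> PA"
    proof (rule PA_sum)
      fix i assume "i \<in> {..<m}"
      then have "d i - r i \<in> P" using r by auto
      then show "\<phi> (to_K (d i - r i)) * a ^ i \<in> PA" using PA_gen A_power[OF a] by blast
    qed
    ultimately have "a ^ k - v \<in> PA" using PA_add 1(1) by simp
    moreover have "v \<in> V" unfolding V_def v_def using rE by blast
    ultimately show ?thesis by blast
  qed
  define N where "N = card R ^ n"
  define vk where "vk k = (SOME v. v \<in> V \<and> a ^ k - v \<in> PA)" for k
  have vk: "vk k \<in> V \<and> a ^ k - vk k \<in> PA" for k
    unfolding vk_def using someI_ex[OF inV[of k, unfolded Bex_def]] .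
  have "\<not> inj_on vk {0..N}"
  proof
    assume "inj_on vk {0..N}"
    then have "card (vk ` {0..N}) = Suc N" by (simp add: card_image)
    moreover have "card (vk ` {0..N}) \<le> card V" using vk Vfin by (intro card_mono) auto
    ultimately show False using cardV N_def by simp
  qed
  then obtain k1 k2 where k: "k1 \<in> {0..N}" "k2 \<in> {0..N}" "k1 \<noteq> k2" "vk k1 = vk k2"
    unfolding inj_on_def by blast
  define i where "i = min k1 k2"
  define j where "j = max k1 k2"
  have ij: "i < j" "j \<le> N" using k unfolding i_def j_def by auto
  have "vk i = vk j" using k unfolding i_def j_def by (cases "k1 \<le> k2") auto
  then have "a ^ j - a ^ i = (a ^ j - vk j) - (a ^ i - vk i)" by simp
  then have "a ^ j - a ^ i \<in> PA" using vk PA_diff by metis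
  then show ?thesis using ij N_def by blast
qed

end

lemma monom_diff_lc:
  assumes "i < j"
  shows "lead_coeff (monom (1::'a::comm_ring_1) j - monom 1 i) = 1"
proof -
  let ?h = "monom (1::'a) j - monom 1 i"
  have c: "coeff ?h j = 1" using assms by simp
  have "degree ?h \<le> j" by (rule degree_le) (use assms in auto)
  moreover have "j \<le> degree ?h" by (rule le_degree) (unfold c, simp)
  ultimately have "degree ?h = j" by simp
  then show ?thesis using c by simp
qed

context bsetup begin

lemma peval_monom: "peval (\<phi> \<circ> to_K) (monom 1 j) b = b ^ j"
  unfolding monom_altdef
  by (simp add: peval_smult[OF chom_phiK] peval_power[OF chom_phiK] peval_X[OF chom_phiK])

lemma peval_prod_PA:
  assumes "finite S" "x0 \<in> S" "peval (\<phi> \<circ> to_K) (h x0) a \<in> PA" "a \<in> A"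
  shows "peval (\<phi> \<circ> to_K) (\<Prod>x\<in>S. h x) a \<in> PA"
  using assms
proof (induct S rule: finite_induct)
  case empty then show ?case by simp
next
  case (insert x S)
  have eq: "peval (\<phi> \<circ> to_K) (\<Prod>x\<in>insert x S. h x) a =
      peval (\<phi> \<circ> to_K) (h x) a * peval (\<phi> \<circ> to_K) (\<Prod>x\<in>S. h x) a"
    using insert(1,2) by (simp add: peval_mult[OF chom_phiK])
  show ?case
  proof (cases "x0 = x")
    case True
    have hx: "peval (\<phi> \<circ> to_K) (h x) a \<in> PA" using insert(5) unfolding True .
    show ?thesis unfolding eq by (rule PA_multR[OF peval_A[OF insert(6)] hx])
  next
    case False
    then have "x0 \<in> S" using insert(4) by simp
    then have "peval (\<phi> \<circ> to_K) (\<Prod>x\<in>S. h x) a \<in> PA" using insert by blast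
    then show ?thesis unfolding eq by (rule PA_multL[OF peval_A[OF insert(6)]])
  qed
qed

lemma C3_N1:
  assumes C3: "finite (quot_ring P) \<and> bounded_degree_mod \<phi> A P"
  shows "null_ideal_mod_nonzero \<phi> A P"
proof -
  obtain R where R: "finite R" "R \<noteq> {}" "\<And>d. \<exists>r\<in>R. d - r \<in> P" using reps_finite C3 by blast
  obtain n where Hb: "\<forall>a\<in>A. \<exists>g. (\<exists>i. coeff g i \<notin> P) \<and> (\<forall>i>n. coeff g i \<in> P) \<and>
      peval (\<phi> \<circ> to_K) g a \<in> PA"
    using C3 unfolding bounded_degree_mod_def PA_def by blast
  define N where "N = card R ^ n"
  define Pairs where "Pairs = {(i, j). i < j \<and> j \<le> N}"
  have Pfin: "finite Pairs"
  proof (rule finite_subset)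
    show "Pairs \<subseteq> {..N} \<times> {..N}" unfolding Pairs_def by auto
  qed simp
  define hX where "hX = (\<lambda>(i, j). monom (1::'d) j - monom 1 i)"
  define G where "G = (\<Prod>x\<in>Pairs. hX x)"
  have "lead_coeff G = 1"
  proof -
    have "lead_coeff G = (\<Prod>x\<in>Pairs. lead_coeff (hX x))" unfolding G_def by (rule lead_coeff_prod)
    also have "\<dots> = 1"
    proof (rule prod.neutral, intro ballI)
      fix x assume "x \<in> Pairs"
      then obtain i j where ij: "x = (i, j)" "i < j" unfolding Pairs_def by blast
      then have "hX x = monom 1 j - monom 1 i" by (simp add: hX_def)
      then show "lead_coeff (hX x) = 1" using monom_diff_lc[OF ij(2)] by (simp only:)
    qed
    finally show ?thesis .
  qed
  then have G1: "coeff G (degree G) \<notin> P" using P_1 by simp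
  have "peval (\<phi> \<circ> to_K) G a \<in> PA" if a: "a \<in> A" for a
  proof -
    obtain g where g: "\<exists>i. coeff g i \<notin> P" "\<forall>i>n. coeff g i \<in> P" "peval (\<phi> \<circ> to_K) g a \<in> PA"
      using Hb a by blast
    then obtain i0 where "coeff g i0 \<notin> P" by blast
    then obtain i j where ij: "i < j" "j \<le> N" "a ^ j - a ^ i \<in> PA"
      using pig[OF R a, of g i0 n] g N_def by blast
    have "(i, j) \<in> Pairs" using ij Pairs_def by simp
    moreover have "peval (\<phi> \<circ> to_K) (hX (i, j)) a \<in> PA"
      unfolding hX_def using ij(3) by (simp add: peval_diff[OF chom_phiK] peval_monom)
    ultimately show ?thesis unfolding G_def using peval_prod_PA[OF Pfin _ _ a] by blast
  qed
  then show ?thesis unfolding null_ideal_mod_nonzero_def PA_def[symmetric] using G1 by blast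
qed

lemma main:
  "(null_ideal_mod_nonzero \<phi> A P \<longleftrightarrow> {f. \<forall>i. coeff f i \<in> loc_D P} \<subset> Int_K \<phi> (loc_A \<phi> A P))
   \<and> (null_ideal_mod_nonzero \<phi> A P \<longleftrightarrow> finite (quot_ring P) \<and> bounded_degree_mod \<phi> A P)"
proof (rule conjI; rule iffI)
  assume N1: "null_ideal_mod_nonzero \<phi> A P"
  then obtain g i0 where "coeff g i0 \<notin> P" "\<forall>a\<in>A. peval (\<phi> \<circ> to_K) g a \<in> PA"
    unfolding null_ideal_mod_nonzero_def PA_def by blast
  then show "{f. \<forall>i. coeff f i \<in> loc_D P} \<subset> Int_K \<phi> (loc_A \<phi> A P)" by (rule N1_C2)
next
  assume "{f. \<forall>i. coeff f i \<in> loc_D P} \<subset> Int_K \<phi> (loc_A \<phi> A P)"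
  then show "null_ideal_mod_nonzero \<phi> A P" by (rule C2_N1)
next
  assume "null_ideal_mod_nonzero \<phi> A P"
  then show "finite (quot_ring P) \<and> bounded_degree_mod \<phi> A P" by (rule N1_C3)
next
  assume "finite (quot_ring P) \<and> bounded_degree_mod \<phi> A P"
  then show "null_ideal_mod_nonzero \<phi> A P" by (rule C3_N1)
qed

end

theorem mainTheorem8:
  fixes \<phi> :: "'d::idom fract \<Rightarrow> 'b::ring_1"
    and A :: "'b set" and P :: "'d set"
  assumes "dedekind_domain TYPE('d)"
    and "standard_assumptions \<phi> A"
    and "is_prime_ideal P" and "P \<noteq> {0}"
  shows "(null_ideal_mod_nonzero \<phi> A P
            \<longleftrightarrow> {f. \<forall>i. coeff f i \<in> loc_D P} \<subset> Int_K \<phi> (loc_A \<phi> A P))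
       \<and> (null_ideal_mod_nonzero \<phi> A P
            \<longleftrightarrow> finite (quot_ring P) \<and> bounded_degree_mod \<phi> A P)"
proof -
  have "bsetup P \<phi> A" unfolding bsetup_def bsetup_axioms_def dsetup_def using assms by simp
  then interpret bsetup P \<phi> A .
  show ?thesis by (rule main)
qed

end
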